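(* Consider a Lindblad system on $\mathbb{C}^n$ in which, in an orthonormal basis $\{|j\rangle\}_{j=1}^n$, the Hamiltonian $H=\sum_j H_j|j\rangle\langle j|$ is diagonal and each Lindblad operator is $L_\alpha = A_\alpha D_\alpha$ ($\alpha=1,\dots,N$), with $A_\alpha$ the permutation matrix of a permutation $\sigma_\alpha$ (so $L_\alpha|j\rangle = D_{\alpha,j}|\sigma_\alpha(j)\rangle$) and $D_\alpha=\mathrm{diag}(D_{\alpha,1},\dots,D_{\alpha,n})$, where the decomposition is chosen so that each cycle of $\sigma_\alpha$ contains at most one index $j$ with $D_{\alpha,j}=0$. Let $N_B$ be the union of the vertex sets of the basins of $G_\Omega$ (for the diagonal projectors $|j\rangle\langle j|$), let $P_\eta$ be the diagonal projector onto the span of $\{|j\rangle: j\in N_\eta\}$ for each basin vertex set $N_\eta$, and $P_B=\sum_\eta P_\eta$. Then there is a hidden enclosure if and only if there is a uniform equivalence relation $\sim$ on a subset $N_\sim\subseteq\{1,\dots,n\}$ with $\nu_\sim\ge2$ such that: (i) (Hamiltonian symmetry) $j\sim k \implies H_j = H_k$; (ii) (Dissipation symmetry) for every $\alpha$, $j\sim k\implies |D_{\alpha,j}|=|D_{\alpha,k}|$; and, for every $\alpha$, $j\sim k\implies \sigma_\alpha(j)\sim\sigma_\alpha(k)$ whenever $\sigma_\alpha(j),\sigma_\alpha(k)\in N_B$; (iii) (Dissipation resonance) the induced coherence graph $G_\sim$ has a connected component that is resonant.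
   Context: $G_\Omega$: directed graph on $\{1,\dots,n\}$ with an edge from $k$ to $j$ of weight $w_{jk}=\sum_{\alpha:\sigma_\alpha(k)=j}|D_{\alpha,k}|^2$ whenever $j\ne k$ and $w_{jk}\ne0$; a basin is a strongly connected component with no edge leaving it. A hidden enclosure is the range of an orthogonal projector $P$ on $\mathbb{C}^n$ whose range is contained in the range of $P_B$, which commutes with $P_BHP_B$ and with $P_BL_\alpha P_B$ for all $\alpha$, and which is neither one of the $P_\eta$ nor a sum of such projectors. An equivalence relation $\sim$ on $N_\sim$ is uniform if all its equivalence classes have the same number $\nu_\sim$ of elements. The induced coherence graph $G_\sim$ has vertex set $N_C=\{(j,k): j,k\in N_\sim,\ j\sim k,\ j\ne k\}$; for each $\alpha$ and each pair of vertices with $\sigma_\alpha(j_1)=j_2$, $\sigma_\alpha(k_1)=k_2$, $D_{\alpha,j_1}\ne0$, $D_{\alpha,k_1}\ne0$, there is a directed edge $(j_1,k_1)\to_\alpha(j_2,k_2)$ (self-edges and multiple edges allowed) with $U(1)$-valued weight $w(j_1,k_1,j_2,k_2,\alpha)=\frac{D_{\alpha,j_1}\overline{D_{\alpha,k_1}}}{|D_{\alpha,j_1}||D_{\alpha,k_1}|}$. A connected component of $G_\sim$ with vertex set $C$ is resonant if there is a function $f_C: C\times C\to U(1)$ that is transitive, i.e. $f_C(x,y)f_C(y,z)=f_C(x,z)$ for all $x,y,z\in C$, and matches every edge weight, i.e. $f_C((j_1,k_1),(j_2,k_2)) = w(j_1,k_1,j_2,k_2,\alpha)$ for every edge $(j_1,k_1)\to_\alpha(j_2,k_2)$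 in the component, regardless of $\alpha$. *)

theory Defs
  imports "HOL-Analysis.Analysis"
begin

text \<open>States are indexed by a finite type 'n (standard orthonormal basis of C^n);
Lindblad operators are indexed by alpha < N.\<close>

definition diag_mat :: "('n::finite \<Rightarrow> complex) \<Rightarrow> complex^'n^'n" where
  "diag_mat d = (\<chi> i j. if i = j then d i else 0)"

text \<open>L = A D with A the permutation matrix of s: L e_j = d j e_(s j).\<close>
definition lindblad_op :: "('n::finite \<Rightarrow> 'n) \<Rightarrow> ('n \<Rightarrow> complex) \<Rightarrow> complex^'n^'n" where
  "lindblad_op s d = (\<chi> i j. if i = s j then d j else 0)"

definition cadjoint :: "complex^'n::finite^'m::finite \<Rightarrow> complex^'m^'n" where
  "cadjoint A = (\<chi> i j. cnj (A $ j $ i))"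

definition orth_projector :: "complex^'n::finite^'n \<Rightarrow> bool" where
  "orth_projector P \<longleftrightarrow> P ** P = P \<and> cadjoint P = P"

definition mat_range :: "complex^'n::finite^'m::finite \<Rightarrow> (complex^'m) set" where
  "mat_range A = range (\<lambda>x. A *v x)"

definition mat_commute :: "complex^'n::finite^'n \<Rightarrow> complex^'n^'n \<Rightarrow> bool" where
  "mat_commute A B \<longleftrightarrow> A ** B = B ** A"

definition omega_weight :: "nat \<Rightarrow> (nat \<Rightarrow> 'n \<Rightarrow> 'n) \<Rightarrow> (nat \<Rightarrow> 'n \<Rightarrow> complex) \<Rightarrow> 'n \<Rightarrow> 'n \<Rightarrow> real" where
  "omega_weight N \<sigma> D j k = (\<Sum>\<alpha>\<in>{\<alpha>. \<alpha> < N \<and> \<sigma> \<alpha> k = j}. (cmod (D \<alpha> k))^2)"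

text \<open>Edge from k to j.\<close>
definition omega_edge :: "nat \<Rightarrow> (nat \<Rightarrow> 'n \<Rightarrow> 'n) \<Rightarrow> (nat \<Rightarrow> 'n \<Rightarrow> complex) \<Rightarrow> 'n \<Rightarrow> 'n \<Rightarrow> bool" where
  "omega_edge N \<sigma> D k j \<longleftrightarrow> j \<noteq> k \<and> omega_weight N \<sigma> D j k \<noteq> 0"

definition omega_scc :: "nat \<Rightarrow> (nat \<Rightarrow> 'n \<Rightarrow> 'n) \<Rightarrow> (nat \<Rightarrow> 'n \<Rightarrow> complex) \<Rightarrow> 'n \<Rightarrow> 'n set" where
  "omega_scc N \<sigma> D k = {j. (omega_edge N \<sigma> D)\<^sup>*\<^sup>* k j \<and> (omega_edge N \<sigma> D)\<^sup>*\<^sup>* j k}"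

definition is_basin :: "nat \<Rightarrow> (nat \<Rightarrow> 'n \<Rightarrow> 'n) \<Rightarrow> (nat \<Rightarrow> 'n \<Rightarrow> complex) \<Rightarrow> 'n set \<Rightarrow> bool" where
  "is_basin N \<sigma> D C \<longleftrightarrow> (\<exists>k. C = omega_scc N \<sigma> D k) \<and>
      (\<forall>x\<in>C. \<forall>y. omega_edge N \<sigma> D x y \<longrightarrow> y \<in> C)"

definition basins :: "nat \<Rightarrow> (nat \<Rightarrow> 'n \<Rightarrow> 'n) \<Rightarrow> (nat \<Rightarrow> 'n \<Rightarrow> complex) \<Rightarrow> 'n set set" where
  "basins N \<sigma> D = {C. is_basin N \<sigma> D C}"

definition basin_union :: "nat \<Rightarrow> (nat \<Rightarrow> 'n \<Rightarrow> 'n) \<Rightarrow> (nat \<Rightarrow> 'n \<Rightarrow> complex) \<Rightarrow> 'n set" where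
  "basin_union N \<sigma> D = \<Union> (basins N \<sigma> D)"

definition diag_proj :: "'n::finite set \<Rightarrow> complex^'n^'n" where
  "diag_proj C = (\<chi> i j. if i = j \<and> i \<in> C then 1 else 0)"

definition basin_proj :: "nat \<Rightarrow> (nat \<Rightarrow> 'n::finite \<Rightarrow> 'n) \<Rightarrow> (nat \<Rightarrow> 'n \<Rightarrow> complex) \<Rightarrow> complex^'n^'n" where
  "basin_proj N \<sigma> D = (\<Sum>C\<in>basins N \<sigma> D. diag_proj C)"

text \<open>Hidden enclosure. "Neither one of the P_eta nor a sum of such projectors" is read as:
P is not equal to the sum of P_eta over any set of basins (the empty sum excludes P = 0).\<close>
definition has_hidden_enclosure ::
  "nat \<Rightarrow> (nat \<Rightarrow> 'n::finite \<Rightarrow> 'n) \<Rightarrow> (nat \<Rightarrow> 'n \<Rightarrow> complex) \<Rightarrow> ('n \<Rightarrow> real) \<Rightarrow> bool" where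
  "has_hidden_enclosure N \<sigma> D Hd \<longleftrightarrow>
    (let PB = basin_proj N \<sigma> D; H = diag_mat (\<lambda>j. complex_of_real (Hd j)) in
     \<exists>P. orth_projector P \<and> mat_range P \<subseteq> mat_range PB
        \<and> mat_commute P (PB ** H ** PB)
        \<and> (\<forall>\<alpha><N. mat_commute P (PB ** lindblad_op (\<sigma> \<alpha>) (D \<alpha>) ** PB))
        \<and> \<not> (\<exists>S \<subseteq> basins N \<sigma> D. P = (\<Sum>C\<in>S. diag_proj C)))"

definition uniform_equiv :: "'a set \<Rightarrow> ('a \<times> 'a) set \<Rightarrow> nat \<Rightarrow> bool" where
  "uniform_equiv A R \<nu> \<longleftrightarrow> equiv A R \<and> (\<forall>c \<in> A // R. card c = \<nu>)"

definition coh_vertices :: "('n \<times> 'n) set \<Rightarrow> ('n \<times> 'n) set" where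
  "coh_vertices R = {(j, k). (j, k) \<in> R \<and> j \<noteq> k}"

definition coh_edge :: "nat \<Rightarrow> (nat \<Rightarrow> 'n \<Rightarrow> 'n) \<Rightarrow> (nat \<Rightarrow> 'n \<Rightarrow> complex) \<Rightarrow> ('n \<times> 'n) set
    \<Rightarrow> 'n \<times> 'n \<Rightarrow> nat \<Rightarrow> 'n \<times> 'n \<Rightarrow> bool" where
  "coh_edge N \<sigma> D R x \<alpha> y \<longleftrightarrow> \<alpha> < N \<and> x \<in> coh_vertices R \<and> y \<in> coh_vertices R
     \<and> \<sigma> \<alpha> (fst x) = fst y \<and> \<sigma> \<alpha> (snd x) = snd y
     \<and> D \<alpha> (fst x) \<noteq> 0 \<and> D \<alpha> (snd x) \<noteq> 0"

definition coh_weight :: "(nat \<Rightarrow> 'n \<Rightarrow> complex) \<Rightarrow> nat \<Rightarrow> 'n \<times> 'n \<Rightarrow> complex" where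
  "coh_weight D \<alpha> x = D \<alpha> (fst x) * cnj (D \<alpha> (snd x))
      / complex_of_real (cmod (D \<alpha> (fst x)) * cmod (D \<alpha> (snd x)))"

text \<open>Undirected adjacency (connected components = weakly connected components).\<close>
definition coh_adj :: "nat \<Rightarrow> (nat \<Rightarrow> 'n \<Rightarrow> 'n) \<Rightarrow> (nat \<Rightarrow> 'n \<Rightarrow> complex) \<Rightarrow> ('n \<times> 'n) set
    \<Rightarrow> 'n \<times> 'n \<Rightarrow> 'n \<times> 'n \<Rightarrow> bool" where
  "coh_adj N \<sigma> D R x y \<longleftrightarrow> (\<exists>\<alpha>. coh_edge N \<sigma> D R x \<alpha> y \<or> coh_edge N \<sigma> D R y \<alpha> x)"

definition coh_component :: "nat \<Rightarrow> (nat \<Rightarrow> 'n \<Rightarrow> 'n) \<Rightarrow> (nat \<Rightarrow> 'n \<Rightarrow> complex) \<Rightarrow> ('n \<times> 'n) set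
    \<Rightarrow> ('n \<times> 'n) set \<Rightarrow> bool" where
  "coh_component N \<sigma> D R C \<longleftrightarrow>
     (\<exists>x \<in> coh_vertices R. C = {y. (coh_adj N \<sigma> D R)\<^sup>*\<^sup>* x y})"

definition resonant :: "nat \<Rightarrow> (nat \<Rightarrow> 'n \<Rightarrow> 'n) \<Rightarrow> (nat \<Rightarrow> 'n \<Rightarrow> complex) \<Rightarrow> ('n \<times> 'n) set
    \<Rightarrow> ('n \<times> 'n) set \<Rightarrow> bool" where
  "resonant N \<sigma> D R C \<longleftrightarrow>
     (\<exists>f :: 'n \<times> 'n \<Rightarrow> 'n \<times> 'n \<Rightarrow> complex.
        (\<forall>x\<in>C. \<forall>y\<in>C. cmod (f x y) = 1)
      \<and> (\<forall>x\<in>C. \<forall>y\<in>C. \<forall>z\<in>C. f x y * f y z = f x z)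
      \<and> (\<forall>x y \<alpha>. x \<in> C \<longrightarrow> y \<in> C \<longrightarrow> coh_edge N \<sigma> D R x \<alpha> y \<longrightarrow> f x y = coh_weight D \<alpha> x))"

end

theory Submission
  imports Defs "HOL-Computational_Algebra.Polynomial" "HOL-Computational_Algebra.Fundamental_Theorem_Algebra"
begin

type_synonym 'n cmat = "complex^'n^'n"

lemma mat_entry: "(mat c :: 'a::zero^'n^'n) $ i $ j = (if i = j then c else 0)"
  by (simp add: mat_def)

lemma matmul_entry: "(A ** B) $ i $ j = (\<Sum>k\<in>UNIV. A $ i $ k * B $ k $ j)"
  by (simp add: matrix_matrix_mult_def)

lemma mat_mult_left: "(mat c ** (M::'n::finite cmat)) $ i $ j = c * M $ i $ j"
  by (simp add: matmul_entry mat_entry if_distrib if_distribR cong: if_cong)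

lemma mat_mult_right: "((M::'n::finite cmat) ** mat c) $ i $ j = M $ i $ j * c"
  by (simp add: matmul_entry mat_entry if_distrib if_distribR cong: if_cong)

lemma mat_comm: "mat c ** (M::'n::finite cmat) = M ** mat c"
  by (simp add: vec_eq_iff mat_mult_left mat_mult_right mult.commute)

lemma mat_add: "mat (a + b) = (mat a + mat b :: 'n::finite cmat)"
  by (simp add: vec_eq_iff mat_entry)

lemma mat_diff: "mat (a - b) = (mat a - mat b :: 'n::finite cmat)"
  by (simp add: vec_eq_iff mat_entry)

lemma mat_mult_mat: "mat a ** mat b = (mat (a * b) :: 'n::finite cmat)"
  by (simp add: vec_eq_iff mat_mult_left mat_entry)

lemma matrix_add_rdistrib': "((B + C) ** A) = (B ** A) + (C ** (A::'n::finite cmat))"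
  by (simp add: vec_eq_iff matmul_entry sum.distrib distrib_right)

lemma matrix_diff_ldistrib: "(A ** (B - C)) = (A ** B) - (A ** (C::'n::finite cmat))"
  by (simp add: vec_eq_iff matmul_entry sum_subtractf right_diff_distrib)

lemma matrix_diff_rdistrib: "((B - C) ** A) = (B ** A) - (C ** (A::'n::finite cmat))"
  by (simp add: vec_eq_iff matmul_entry sum_subtractf left_diff_distrib)

lemma mat_scal_assoc: "mat c ** ((A::'n::finite cmat) ** B) = (mat c ** A) ** B"
  by (simp add: matrix_mul_assoc)

definition mpoly :: "complex poly \<Rightarrow> 'n::finite cmat \<Rightarrow> 'n cmat" where
  "mpoly p Y = fold_coeffs (\<lambda>c M. mat c + Y ** M) p 0"

lemma mpoly_0[simp]: "mpoly 0 Y = 0"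
  by (simp add: mpoly_def)

lemma mpoly_pCons[simp]: "mpoly (pCons c p) Y = mat c + Y ** mpoly p Y"
  by (cases "p = 0 \<and> c = 0") (auto simp: mpoly_def)

lemma mpoly_const[simp]: "mpoly [:c:] Y = mat c"
  by simp

lemma mpoly_add: "mpoly (p + q) Y = mpoly p Y + mpoly q Y"
proof (induction p arbitrary: q)
  case 0 then show ?case by simp
next
  case (pCons a p)
  then show ?case
    by (cases q) (simp add: matrix_add_ldistrib mat_add algebra_simps)
qed

lemma mpoly_smult: "mpoly (smult c p) Y = mat c ** mpoly p Y"
proof (induction p)
  case 0 then show ?case by simp
next
  case (pCons a p)
  have "Y ** (mat c ** mpoly p Y) = mat c ** (Y ** mpoly p Y)"
    by (metis mat_comm matrix_mul_assoc)
  then show ?case using pCons by (simp add: matrix_add_ldistrib mat_mult_mat)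
qed

lemma mpoly_minus: "mpoly (- p) Y = - mpoly p Y"
proof -
  have "mpoly (- p) Y + mpoly p Y = 0"
    by (simp add: mpoly_add[symmetric])
  then show ?thesis by (simp add: eq_neg_iff_add_eq_0)
qed

lemma mpoly_diff: "mpoly (p - q) Y = mpoly p Y - mpoly q Y"
  using mpoly_add[of p "- q" Y] by (simp add: mpoly_minus)

lemma mpoly_mult: "mpoly (p * q) Y = mpoly p Y ** mpoly q Y"
proof (induction p)
  case 0 then show ?case by simp
next
  case (pCons a p)
  have "pCons a p * q = smult a q + pCons 0 (p * q)" by simp
  then show ?case using pCons
    by (simp add: mpoly_add mpoly_smult matrix_add_rdistrib' matrix_mul_assoc)
qed

lemma mpoly_X[simp]: "mpoly [:0, 1:] Y = Y"
  by simp

lemma mpoly_comm: "Z ** Y = Y ** Z \<Longrightarrow> Z ** mpoly p Y = mpoly p Y ** Z"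
proof (induction p)
  case 0 then show ?case by simp
next
  case (pCons a p)
  have "Z ** (Y ** mpoly p Y) = (Y ** mpoly p Y) ** Z"
    by (metis pCons matrix_mul_assoc)
  then show ?case
    by (simp add: matrix_add_ldistrib matrix_add_rdistrib' mat_comm)
qed

lemma mpoly_eig: "Y ** (W::'n::finite cmat) = mat a ** W \<Longrightarrow> mpoly p Y ** W = mat (poly p a) ** W"
proof (induction p)
  case 0 then show ?case by simp
next
  case (pCons c p)
  have "Y ** mpoly p Y ** W = Y ** (mpoly p Y ** W)" by (simp add: matrix_mul_assoc)
  also have "\<dots> = Y ** (mat (poly p a) ** W)" using pCons by simp
  also have "\<dots> = mat (poly p a) ** (Y ** W)"
    by (metis mat_comm matrix_mul_assoc)
  also have "\<dots> = mat (poly p a) ** (mat a ** W)" using pCons by simp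
  also have "\<dots> = mat (a * poly p a) ** W"
    by (simp add: matrix_mul_assoc mat_mult_mat mult.commute)
  finally have e: "Y ** mpoly p Y ** W = mat (a * poly p a) ** W" .
  have "(mat c + Y ** mpoly p Y) ** W = mat c ** W + Y ** mpoly p Y ** W"
    by (rule matrix_add_rdistrib')
  also have "\<dots> = (mat c + mat (a * poly p a)) ** W"
    by (simp only: e matrix_add_rdistrib')
  finally show ?case by (simp only: mpoly_pCons poly_pCons mat_add)
qed

lemma mpoly_pcompose: "mpoly (pcompose p q) Y = mpoly p (mpoly q Y)"
  by (induction p) (simp_all add: pcompose_pCons mpoly_add mpoly_mult)

lemma mpoly_transfer:
  fixes W :: "'n::finite cmat"
  assumes a1: "Y' ** W = Y ** W" and a2: "W ** Y = Y ** W"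
  shows "mpoly p Y' ** W = mpoly p Y ** W"
proof (induction p)
  case 0 then show ?case by simp
next
  case (pCons c p)
  have cm: "W ** mpoly p Y = mpoly p Y ** W" by (rule mpoly_comm[OF a2])
  have "Y' ** mpoly p Y' ** W = Y' ** (mpoly p Y' ** W)" by (simp add: matrix_mul_assoc)
  also have "\<dots> = Y' ** (mpoly p Y ** W)" using pCons by simp
  also have "\<dots> = Y' ** (W ** mpoly p Y)" by (simp only: cm)
  also have "\<dots> = (Y' ** W) ** mpoly p Y" by (simp add: matrix_mul_assoc)
  also have "\<dots> = (Y ** W) ** mpoly p Y" by (simp only: a1)
  also have "\<dots> = Y ** (W ** mpoly p Y)" by (simp add: matrix_mul_assoc)
  also have "\<dots> = Y ** mpoly p Y ** W" by (simp only: cm matrix_mul_assoc)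
  finally show ?case
    by (simp add: matrix_add_rdistrib')
qed


subsection \<open>Adjoint\<close>

lemma cadj_entry: "cadjoint A $ i $ j = cnj (A $ j $ i)"
  by (simp add: cadjoint_def)

lemma cadj_cadj[simp]: "cadjoint (cadjoint A) = A"
  by (simp add: vec_eq_iff cadj_entry)

lemma cadj_mult: "cadjoint ((A::'n::finite cmat) ** B) = cadjoint B ** cadjoint A"
  by (simp add: vec_eq_iff cadj_entry matmul_entry mult.commute)

lemma cadj_add: "cadjoint ((A::'n::finite cmat) + B) = cadjoint A + cadjoint B"
  by (simp add: vec_eq_iff cadj_entry)

lemma cadj_diff: "cadjoint ((A::'n::finite cmat) - B) = cadjoint A - cadjoint B"
  by (simp add: vec_eq_iff cadj_entry)

lemma cadj_mat: "cadjoint (mat c :: 'n::finite cmat) = mat (cnj c)"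
  by (simp add: vec_eq_iff cadj_entry mat_entry)

lemma cadj_zero[simp]: "cadjoint (0 :: 'n::finite cmat) = 0"
  by (simp add: vec_eq_iff cadj_entry)

lemma herm_entry: "cadjoint Y = Y \<Longrightarrow> Y $ i $ j = cnj (Y $ j $ i)"
  by (metis cadj_entry)

lemma herm_cnj: "cadjoint Y = Y \<Longrightarrow> cnj (Y $ i $ j) = Y $ j $ i"
  by (metis cadj_entry)

lemma sum_cnj_self_zero:
  fixes v :: "'n::finite \<Rightarrow> complex"
  assumes "(\<Sum>i\<in>UNIV. cnj (v i) * v i) = 0"
  shows "v i = 0"
proof -
  have "(\<Sum>i\<in>UNIV. (cmod (v i))^2) = 0"
  proof -
    have "complex_of_real (\<Sum>i\<in>UNIV. (cmod (v i))^2) = (\<Sum>i\<in>UNIV. cnj (v i) * v i)"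
      unfolding of_real_sum by (rule sum.cong) (auto simp: complex_norm_square[symmetric] mult.commute)
    then show ?thesis using assms by (metis of_real_eq_0_iff)
  qed
  then have "\<forall>i\<in>UNIV. (cmod (v i))^2 = 0"
    by (subst sum_nonneg_eq_0_iff[symmetric]) auto
  then show ?thesis by simp
qed

lemma herm_quad_real:
  fixes Y :: "'n::finite cmat"
  assumes h: "cadjoint Y = Y"
  shows "cnj (\<Sum>i\<in>UNIV. cnj (v i) * (\<Sum>k\<in>UNIV. Y$i$k * v k)) =
         (\<Sum>i\<in>UNIV. cnj (v i) * (\<Sum>k\<in>UNIV. Y$i$k * v k))"
proof -
  have "cnj (\<Sum>i\<in>UNIV. cnj (v i) * (\<Sum>k\<in>UNIV. Y$i$k * v k))
      = (\<Sum>i\<in>UNIV. \<Sum>k\<in>UNIV. v i * cnj (Y$i$k) * cnj (v k))"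
    by (simp add: sum_distrib_left mult.assoc)
  also have "\<dots> = (\<Sum>i\<in>UNIV. \<Sum>k\<in>UNIV. v i * Y$k$i * cnj (v k))"
    using herm_cnj[OF h] by simp
  also have "\<dots> = (\<Sum>k\<in>UNIV. \<Sum>i\<in>UNIV. v i * Y$k$i * cnj (v k))"
    by (rule sum.swap)
  also have "\<dots> = (\<Sum>i\<in>UNIV. cnj (v i) * (\<Sum>k\<in>UNIV. Y$i$k * v k))"
    by (simp add: sum_distrib_left mult_ac)
  finally show ?thesis .
qed

lemma herm_eig_nonreal:
  fixes Y :: "'n::finite cmat"
  assumes h: "cadjoint Y = Y" and c: "Im c \<noteq> 0"
    and e: "\<And>i. (\<Sum>k\<in>UNIV. Y$i$k * v k) = c * v i"
  shows "v i = 0"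
proof -
  let ?s = "\<Sum>i\<in>UNIV. cnj (v i) * v i"
  have q: "(\<Sum>i\<in>UNIV. cnj (v i) * (\<Sum>k\<in>UNIV. Y$i$k * v k)) = c * ?s"
    by (simp only: e) (simp add: sum_distrib_left mult_ac)
  have sr: "cnj ?s = ?s" by (simp add: mult.commute)
  have "cnj (c * ?s) = c * ?s" using herm_quad_real[OF h, of v] q by simp
  then have "cnj c * ?s = c * ?s" using sr by simp
  then have "(cnj c - c) * ?s = 0" by (simp add: algebra_simps)
  moreover have "cnj c - c \<noteq> 0" using c by (simp add: complex_eq_iff)
  ultimately have "?s = 0" by simp
  then show ?thesis by (rule sum_cnj_self_zero)
qed

lemma herm_sq_zero:
  fixes Z :: "'n::finite cmat"
  assumes h: "cadjoint Z = Z"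
    and e: "\<And>i. (\<Sum>k\<in>UNIV. Z$i$k * u k) = 0"
    and u: "\<And>i. u i = (\<Sum>k\<in>UNIV. Z$i$k * w k)"
  shows "u i = 0"
proof -
  have "(\<Sum>i\<in>UNIV. cnj (u i) * u i) = (\<Sum>i\<in>UNIV. \<Sum>k\<in>UNIV. cnj (u i) * Z$i$k * w k)"
    by (subst (2) u) (simp add: sum_distrib_left mult_ac)
  also have "\<dots> = (\<Sum>k\<in>UNIV. \<Sum>i\<in>UNIV. cnj (u i) * Z$i$k * w k)"
    by (rule sum.swap)
  also have "\<dots> = (\<Sum>k\<in>UNIV. w k * cnj (\<Sum>i\<in>UNIV. Z$k$i * u i))"
    by (simp add: sum_distrib_left herm_cnj[OF h] mult_ac)
  also have "\<dots> = 0" by (simp add: e)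
  finally show ?thesis by (rule sum_cnj_self_zero)
qed

lemma mat_inj_nonreal:
  fixes Y W :: "'n::finite cmat"
  assumes h: "cadjoint Y = Y" and c: "Im c \<noteq> 0" and z: "(Y - mat c) ** W = 0"
  shows "W = 0"
proof -
  have "W $ i $ j = 0" for i j
  proof -
    have "\<And>i. (\<Sum>k\<in>UNIV. Y$i$k * W$k$j) = c * W$i$j"
    proof -
      fix i
      have "((Y - mat c) ** W) $ i $ j = 0" using z by simp
      then have "(Y ** W) $ i $ j - (mat c ** W) $ i $ j = 0"
        by (simp add: matrix_diff_rdistrib)
      then show "(\<Sum>k\<in>UNIV. Y$i$k * W$k$j) = c * W$i$j"
        by (simp add: matmul_entry[of Y] mat_mult_left)
    qed
    from herm_eig_nonreal[OF h c this] show ?thesis .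
  qed
  then show ?thesis by (simp add: vec_eq_iff)
qed

lemma mat_sq_zero:
  fixes Z W :: "'n::finite cmat"
  assumes h: "cadjoint Z = Z" and z: "Z ** (Z ** W) = 0"
  shows "Z ** W = 0"
proof -
  have "(Z ** W) $ i $ j = 0" for i j
  proof -
    have "\<And>i. (\<Sum>k\<in>UNIV. Z$i$k * (Z ** W)$k$j) = 0"
      using z by (metis matmul_entry zero_index)
    from herm_sq_zero[OF h this, of "\<lambda>k. W$k$j"] show ?thesis
      by (simp add: matmul_entry)
  qed
  then show ?thesis by (simp add: vec_eq_iff)
qed


subsection \<open>Annihilating polynomial\<close>

lemma mpoly_sum: "mpoly (sum f A) Y = (\<Sum>i\<in>A. mpoly (f i) Y)"
  by (induction A rule: infinite_finite_induct) (simp_all add: mpoly_add)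

lemma mat_of_real_scale: "mat (complex_of_real r) ** (M::'n::finite cmat) = r *\<^sub>R M"
  by (simp add: vec_eq_iff mat_mult_left) (simp add: scaleR_conv_of_real)

lemma degree_X_power: "degree ([:0, 1::complex:] ^ n) = n"
  by (simp add: degree_power_eq)

lemma annihilator: fixes Y :: "'n::finite cmat" shows "\<exists>p. p \<noteq> 0 \<and> mpoly p Y = 0"
proof -
  define K where "K = DIM('n cmat)"
  define pw where "pw i = mpoly ([:0,1:]^i) Y" for i
  show ?thesis
  proof (cases "inj_on pw {..K}")
    case False
    then obtain i j where ij: "i \<noteq> j" "pw i = pw j" unfolding inj_on_def by auto
    let ?p = "[:0,1:]^i - [:0,1:]^j :: complex poly"
    have "?p \<noteq> 0"
    proof
      assume "?p = 0"
      then have "degree ([:0, 1::complex:] ^ i) = degree ([:0, 1::complex:] ^ j)" by simp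
      then show False using ij(1) by (simp add: degree_X_power)
    qed
    moreover have "mpoly ?p Y = 0" using ij(2) by (simp add: mpoly_diff pw_def)
    ultimately show ?thesis by blast
  next
    case True
    let ?S = "pw ` {..K}"
    have "card ?S = Suc K" using True by (simp add: card_image)
    then have "dependent ?S"
      by (intro dependent_biggerset) (simp add: K_def)
    then obtain u where u: "\<exists>v\<in>?S. u v \<noteq> 0" "(\<Sum>v\<in>?S. u v *\<^sub>R v) = 0"
      using real_vector.dependent_finite[of ?S] by auto
    define p where "p = (\<Sum>i\<le>K. monom (complex_of_real (u (pw i))) i)"
    have "mpoly p Y = (\<Sum>i\<le>K. u (pw i) *\<^sub>R pw i)"
      by (simp add: p_def mpoly_sum monom_altdef mpoly_smult mat_of_real_scale pw_def)
    also have "\<dots> = (\<Sum>v\<in>?S. u v *\<^sub>R v)"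
      by (simp add: sum.reindex[OF True])
    also have "\<dots> = 0" by (rule u(2))
    finally have z: "mpoly p Y = 0" .
    obtain i0 where i0: "i0 \<le> K" "u (pw i0) \<noteq> 0" using u(1) by auto
    have "coeff p i0 = complex_of_real (u (pw i0))"
      using i0(1) by (simp add: p_def coeff_sum coeff_monom)
    then have "p \<noteq> 0" using i0(2) by auto
    with z show ?thesis by blast
  qed
qed

subsection \<open>Spectral projector lemma\<close>

definition nondiag :: "'n::finite cmat \<Rightarrow> bool" where
  "nondiag M \<longleftrightarrow> (\<exists>i j. i \<noteq> j \<and> M $ i $ j \<noteq> 0)"

definition good :: "complex poly \<Rightarrow> 'n::finite cmat \<Rightarrow> bool" where
  "good t Y \<longleftrightarrow> mpoly t Y ** mpoly t Y = mpoly t Y \<and> cadjoint (mpoly t Y) = mpoly t Y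
     \<and> nondiag (mpoly t Y)"

lemma mpoly_lin: "mpoly [:-c, 1:] Y = Y - mat c"
proof -
  have "mpoly [:-c, 1:] Y = mat (-c) + Y" by simp
  also have "mat (-c) = - (mat c :: 'a cmat)" by (simp add: vec_eq_iff mat_entry)
  finally show ?thesis by simp
qed

lemma herm_shift: "cadjoint Y = Y \<Longrightarrow> Im a = 0 \<Longrightarrow> cadjoint (Y - mat a) = Y - mat a"
proof -
  assume "cadjoint Y = Y" "Im a = 0"
  moreover have "cnj a = a" using \<open>Im a = 0\<close> by (simp add: complex_eq_iff)
  ultimately show ?thesis by (simp add: cadj_diff cadj_mat)
qed

lemma degree_lin_mult: "(r::complex poly) \<noteq> 0 \<Longrightarrow> degree ([:-c, 1:] * r) = Suc (degree r)"
proof -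
  assume r: "r \<noteq> 0"
  have h1: "[:-c, 1:] \<noteq> 0" by simp
  have h2: "degree [:-c, 1:] = 1" by simp
  show ?thesis by (simp only: degree_mult_eq[OF h1 r] h2)
qed

lemma mpoly_lin_mult: "mpoly ([:-c, 1:] * r) Y = (Y - mat c) ** mpoly r Y"
  by (simp only: mpoly_mult mpoly_lin)

lemma specproj_aux:
  fixes Y :: "'n::finite cmat"
  assumes "p \<noteq> 0" "mpoly p Y = 0" "cadjoint Y = Y" "nondiag Y"
  shows "\<exists>t. good t Y"
  using assms
proof (induction "degree p" arbitrary: p Y rule: less_induct)
  case less
  note IH = less.hyps
  have pnz: "p \<noteq> 0" and pY: "mpoly p Y = 0" and hY: "cadjoint Y = Y" and nY: "nondiag Y"
    using less.prems by auto
  have degpos: "degree p \<noteq> 0"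
  proof
    assume "degree p = 0"
    then obtain c where pc: "p = [:c:]" by (metis degree_eq_zeroE)
    then have "c \<noteq> 0" using pnz by auto
    moreover have "mat c = (0::'n cmat)" using pY pc by simp
    then have "(mat c :: 'n cmat) $ i $ i = 0" for i by simp
    ultimately show False by (simp add: mat_entry)
  qed
  have root_dec: "\<exists>r. p = [:-c, 1:] * r \<and> r \<noteq> 0 \<and> degree r < degree p" if "poly p c = 0" for c
  proof -
    from that obtain r where r: "p = [:-c, 1:] * r"
      by (metis poly_eq_0_iff_dvd dvdE)
    then have rnz: "r \<noteq> 0" using pnz by auto
    have "degree p = Suc (degree r)" unfolding r by (rule degree_lin_mult[OF rnz])
    with r rnz show ?thesis by auto
  qed
  show ?case
  proof (cases "\<exists>c. poly p c = 0 \<and> Im c \<noteq> 0")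
    case True
    then obtain c where c: "poly p c = 0" "Im c \<noteq> 0" by blast
    obtain r where r: "p = [:-c, 1:] * r" "r \<noteq> 0" "degree r < degree p"
      using root_dec[OF c(1)] by blast
    have "(Y - mat c) ** mpoly r Y = 0" using pY r(1) mpoly_lin_mult by metis
    then have "mpoly r Y = 0" by (rule mat_inj_nonreal[OF hY c(2)])
    then show ?thesis using IH[OF r(3) r(2) _ hY nY] by blast
  next
    case False
    then have allreal: "\<And>c. poly p c = 0 \<Longrightarrow> Im c = 0" by blast
    have "\<not> constant (poly p)" using degpos by (simp add: constant_degree)
    then obtain a where a: "poly p a = 0" using fundamental_theorem_of_algebra by blast
    have aR: "Im a = 0" using allreal[OF a] .
    obtain r where r: "p = [:-a, 1:] * r" "r \<noteq> 0" "degree r < degree p"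
      using root_dec[OF a] by blast
    have hZ: "cadjoint (Y - mat a) = Y - mat a" by (rule herm_shift[OF hY aR])
    have rz: "(Y - mat a) ** mpoly r Y = 0" using pY r(1) mpoly_lin_mult by metis
    show ?thesis
    proof (cases "poly r a = 0")
      case True
      then obtain s where s: "r = [:-a, 1:] * s" by (metis poly_eq_0_iff_dvd dvdE)
      have "(Y - mat a) ** ((Y - mat a) ** mpoly s Y) = 0"
        using rz s mpoly_lin_mult by metis
      then have "(Y - mat a) ** mpoly s Y = 0" by (rule mat_sq_zero[OF hZ])
      then have "mpoly r Y = 0" using s mpoly_lin_mult by metis
      then show ?thesis using IH[OF r(3) r(2) _ hY nY] by blast
    next
      case False
      define ra where "ra = poly r a"
      have ra: "ra \<noteq> 0" using False ra_def by simp
      define t where "t = smult (1 / ra) r"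
      define Q where "Q = mpoly t Y"
      have Qdef: "Q = mat (1/ra) ** mpoly r Y" by (simp add: Q_def t_def mpoly_smult)
      have "(Y - mat a) ** Q = mat (1/ra) ** ((Y - mat a) ** mpoly r Y)"
        unfolding Qdef by (metis mat_comm matrix_mul_assoc)
      then have YQ0: "(Y - mat a) ** Q = 0" using rz by simp
      then have YQ: "Y ** Q = mat a ** Q" by (simp add: matrix_diff_rdistrib)
      have pta: "poly t a = 1" using ra by (simp add: t_def ra_def)
      have QQ: "Q ** Q = Q" using mpoly_eig[OF YQ, of t] pta by (simp add: Q_def)
      have QYc: "Y ** Q = Q ** Y" unfolding Q_def by (rule mpoly_comm) simp
      have YQ': "Y ** cadjoint Q = mat a ** cadjoint Q"
      proof -
        have "cadjoint (Q ** Y) = cadjoint (mat a ** Q)" using YQ QYc by simp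
        then have "Y ** cadjoint Q = cadjoint Q ** mat (cnj a)" by (simp add: cadj_mult cadj_mat hY)
        moreover have "cnj a = a" using aR by (simp add: complex_eq_iff)
        ultimately show ?thesis by (simp add: mat_comm)
      qed
      have "Q ** cadjoint Q = cadjoint Q"
        using mpoly_eig[OF YQ', of t] pta by (simp add: Q_def)
      then have "cadjoint (Q ** cadjoint Q) = cadjoint (cadjoint Q)" by simp
      then have hQ: "cadjoint Q = Q"
        by (metis \<open>Q ** cadjoint Q = cadjoint Q\<close> cadj_cadj cadj_mult)
      show ?thesis
      proof (cases "nondiag Q")
        case True
        then show ?thesis using QQ hQ unfolding good_def Q_def by blast
      next
        case False
        then have Qd: "\<And>i j. i \<noteq> j \<Longrightarrow> Q $ i $ j = 0" unfolding nondiag_def by blast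
        have degr: "degree r \<noteq> 0"
        proof
          assume "degree r = 0"
          then obtain c where rc: "r = [:c:]" by (metis degree_eq_zeroE)
          then have "Q = mat 1" using ra by (simp add: Q_def t_def ra_def)
          then have "Y = mat a" using YQ by simp
          then show False using nY by (auto simp: nondiag_def mat_entry)
        qed
        have "\<not> constant (poly r)" using degr by (simp add: constant_degree)
        then obtain b where b: "poly r b = 0" using fundamental_theorem_of_algebra by blast
        have "poly p b = 0" using b r(1) by simp
        then have bR: "Im b = 0" by (rule allreal)
        define s where "s = [:0, 1:] + smult (b - a) t"
        define Y' where "Y' = mpoly s Y"
        have Y'def: "Y' = Y + mat (b - a) ** Q"
          by (simp add: Y'_def s_def mpoly_add mpoly_smult Q_def)
        have hY': "cadjoint Y' = Y'"
        proof -
          have "cnj (b - a) = b - a" using aR bR by (simp add: complex_eq_iff)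
          then show ?thesis
            by (simp add: Y'def cadj_add cadj_mult cadj_mat hY hQ mat_comm)
        qed
        have nY': "nondiag Y'"
        proof -
          obtain i j where ij: "i \<noteq> j" "Y $ i $ j \<noteq> 0" using nY nondiag_def by blast
          have "Y' $ i $ j = Y $ i $ j" using Qd[OF ij(1)] by (simp add: Y'def mat_mult_left)
          then show ?thesis using ij nondiag_def by metis
        qed
        have Y'Q: "Y' ** Q = mat b ** Q"
        proof -
          have "Y' ** Q = Y ** Q + mat (b - a) ** (Q ** Q)"
            by (simp add: Y'def matrix_add_rdistrib' matrix_mul_assoc)
          also have "\<dots> = mat a ** Q + mat (b - a) ** Q" using YQ QQ by simp
          also have "\<dots> = mat b ** Q" by (simp add: matrix_add_rdistrib'[symmetric] mat_add[symmetric])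
          finally show ?thesis .
        qed
        have r1: "mpoly r Y' ** Q = 0" using mpoly_eig[OF Y'Q, of r] b by simp
        define W where "W = mat 1 - Q"
        have Y'W: "Y' ** W = Y ** W"
        proof -
          have "mat (b - a) ** Q ** W = mat (b - a) ** (Q ** W)" by (simp add: matrix_mul_assoc)
          also have "Q ** W = 0" using QQ by (simp add: W_def matrix_diff_ldistrib)
          finally show ?thesis by (simp add: Y'def matrix_add_rdistrib')
        qed
        have WY: "W ** Y = Y ** W"
          using QYc by (simp add: W_def matrix_diff_ldistrib matrix_diff_rdistrib)
        have r2: "mpoly r Y' ** W = 0"
        proof -
          have "mpoly r Y' ** W = mpoly r Y ** W" by (rule mpoly_transfer[OF Y'W WY])
          also have "\<dots> = mpoly r Y - mpoly r Y ** Q" by (simp add: W_def matrix_diff_ldistrib)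
          also have "mpoly r Y ** Q = mat ra ** Q" using mpoly_eig[OF YQ, of r] by (simp add: ra_def)
          also have "\<dots> = mpoly r Y" using ra by (simp add: Qdef matrix_mul_assoc mat_mult_mat)
          finally show ?thesis by simp
        qed
        have "mpoly r Y' = mpoly r Y' ** (Q + W)" by (simp add: W_def)
        also have "\<dots> = 0" using r1 r2 by (simp add: matrix_add_ldistrib)
        finally have "mpoly r Y' = 0" .
        then obtain t' where t': "good t' Y'" using IH[OF r(3) r(2) _ hY' nY'] by blast
        have "mpoly (pcompose t' s) Y = mpoly t' Y'" by (simp add: mpoly_pcompose Y'_def)
        then have "good (pcompose t' s) Y" using t' by (simp add: good_def)
        then show ?thesis by blast
      qed
    qed
  qed
qed

lemma spectral_projector:
  fixes Y :: "'n::finite cmat"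
  assumes "cadjoint Y = Y" "nondiag Y"
  shows "\<exists>t. good t Y"
  using annihilator[of Y] specproj_aux assms by blast


lemma diag_proj_entry: "diag_proj C $ i $ j = (if i = j \<and> i \<in> C then 1 else 0)"
  by (simp add: diag_proj_def)

lemma sum_mat_entry: "(sum f S :: 'n::finite cmat) $ i $ j = (\<Sum>x\<in>S. f x $ i $ j)"
  by (simp add: sum_component)

lemma diag_proj_sum:
  assumes fin: "finite S" and disj: "\<And>C1 C2 x. C1 \<in> S \<Longrightarrow> C2 \<in> S \<Longrightarrow> x \<in> C1 \<Longrightarrow> x \<in> C2 \<Longrightarrow> C1 = C2"
  shows "(\<Sum>C\<in>S. diag_proj C) = (diag_proj (\<Union>S) :: 'n::finite cmat)"
proof -
  have "(\<Sum>C\<in>S. diag_proj C :: 'n cmat) $ i $ j = diag_proj (\<Union>S) $ i $ j" for i j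
  proof (cases "i = j")
    case False then show ?thesis by (simp add: sum_mat_entry diag_proj_entry)
  next
    case True
    show ?thesis
    proof (cases "i \<in> \<Union>S")
      case True
      then obtain C0 where C0: "C0 \<in> S" "i \<in> C0" by auto
      have "(\<Sum>C\<in>S. diag_proj C :: 'n cmat) $ i $ j = (\<Sum>C\<in>S. if C = C0 then 1 else 0)"
        unfolding sum_mat_entry
        by (rule sum.cong) (use C0 disj \<open>i = j\<close> in \<open>auto simp: diag_proj_entry\<close>)
      also have "\<dots> = 1" using C0 fin by simp
      finally show ?thesis using True \<open>i = j\<close> by (simp add: diag_proj_entry)
    next
      case False
      then show ?thesis by (auto simp: sum_mat_entry diag_proj_entry)
    qed
  qed
  then show ?thesis by (simp add: vec_eq_iff)
qed

lemma diag_proj_diag: "i \<noteq> j \<Longrightarrow> diag_proj C $ i $ j = 0"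
  by (simp add: diag_proj_entry)

lemma sum_diag_proj_diag: "i \<noteq> j \<Longrightarrow> (\<Sum>C\<in>S. diag_proj C :: 'n::finite cmat) $ i $ j = 0"
  by (simp add: sum_mat_entry diag_proj_entry)

lemma lindblad_entry: "lindblad_op s d $ i $ j = (if i = s j then d j else 0)"
  by (simp add: lindblad_op_def)

lemma diag_mat_entry: "diag_mat h $ i $ j = (if i = j then h i else 0)"
  by (simp add: diag_mat_def)

lemma dp_left: "(diag_proj B ** (M::'n::finite cmat)) $ a $ c = (if a \<in> B then M $ a $ c else 0)"
proof -
  have "(diag_proj B ** M) $ a $ c = (\<Sum>k\<in>UNIV. if k = a then (if a \<in> B then M $ a $ c else 0) else 0)"
    unfolding matmul_entry by (rule sum.cong) (auto simp: diag_proj_entry)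
  then show ?thesis by simp
qed

lemma dp_right: "((M::'n::finite cmat) ** diag_proj B) $ a $ c = (if c \<in> B then M $ a $ c else 0)"
proof -
  have "(M ** diag_proj B) $ a $ c = (\<Sum>k\<in>UNIV. if k = c then (if c \<in> B then M $ a $ c else 0) else 0)"
    unfolding matmul_entry by (rule sum.cong) (auto simp: diag_proj_entry)
  then show ?thesis by simp
qed

lemma proj_L_entry:
  "(diag_proj B ** lindblad_op s d ** diag_proj B :: 'n::finite cmat) $ a $ b =
     (if a \<in> B \<and> b \<in> B \<and> a = s b then d b else 0)"
  by (auto simp: dp_left dp_right lindblad_entry)

lemma proj_H_entry:
  "(diag_proj B ** diag_mat h ** diag_proj B :: 'n::finite cmat) $ a $ b =
     (if a = b \<and> a \<in> B then h a else 0)"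
  by (auto simp: dp_left dp_right diag_mat_entry)

lemma comm_L_right:
  fixes X :: "'n::finite cmat"
  shows "(X ** (diag_proj B ** lindblad_op s d ** diag_proj B)) $ a $ b =
     (if b \<in> B \<and> s b \<in> B then X $ a $ (s b) * d b else 0)"
proof -
  have "(X ** (diag_proj B ** lindblad_op s d ** diag_proj B)) $ a $ b =
      (\<Sum>c\<in>UNIV. if c = s b then (if b \<in> B \<and> s b \<in> B then X $ a $ (s b) * d b else 0) else 0)"
    unfolding matmul_entry[of X] proj_L_entry by (rule sum.cong) auto
  also have "\<dots> = (if b \<in> B \<and> s b \<in> B then X $ a $ (s b) * d b else 0)" by simp
  finally show ?thesis .
qed

lemma comm_L_left:
  fixes X :: "'n::finite cmat"
  assumes s: "s permutes UNIV"
  shows "((diag_proj B ** lindblad_op s d ** diag_proj B) ** X) $ a $ b =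
     (if a \<in> B \<and> inv s a \<in> B then d (inv s a) * X $ (inv s a) $ b else 0)"
proof -
  have eq: "a = s c \<longleftrightarrow> c = inv s a" for c
    using s by (metis permutes_inverses(1) permutes_inverses(2))
  have "((diag_proj B ** lindblad_op s d ** diag_proj B) ** X) $ a $ b =
      (\<Sum>c\<in>UNIV. if c = inv s a then (if a \<in> B \<and> inv s a \<in> B then d (inv s a) * X $ (inv s a) $ b else 0) else 0)"
    unfolding matmul_entry[of _ X] proj_L_entry by (rule sum.cong) (auto simp: eq)
  also have "\<dots> = (if a \<in> B \<and> inv s a \<in> B then d (inv s a) * X $ (inv s a) $ b else 0)" by simp
  finally show ?thesis .
qed

lemma comm_H_right:
  fixes X :: "'n::finite cmat"
  shows "(X ** (diag_proj B ** diag_mat h ** diag_proj B)) $ a $ b = (if b \<in> B then X $ a $ b * h b else 0)"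
proof -
  have "(X ** (diag_proj B ** diag_mat h ** diag_proj B)) $ a $ b =
      (\<Sum>c\<in>UNIV. if c = b then (if b \<in> B then X $ a $ b * h b else 0) else 0)"
    unfolding matmul_entry[of X] proj_H_entry by (rule sum.cong) auto
  then show ?thesis by simp
qed

lemma comm_H_left:
  fixes X :: "'n::finite cmat"
  shows "((diag_proj B ** diag_mat h ** diag_proj B) ** X) $ a $ b = (if a \<in> B then h a * X $ a $ b else 0)"
proof -
  have "((diag_proj B ** diag_mat h ** diag_proj B) ** X) $ a $ b =
      (\<Sum>c\<in>UNIV. if c = a then (if a \<in> B then h a * X $ a $ b else 0) else 0)"
    unfolding matmul_entry[of _ X] proj_H_entry by (rule sum.cong) auto
  then show ?thesis by simp
qed


locale lsys =
  fixes N :: nat and \<sigma> :: "nat \<Rightarrow> 'n::finite \<Rightarrow> 'n" and D :: "nat \<Rightarrow> 'n \<Rightarrow> complex"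
  assumes perm: "\<forall>\<alpha><N. \<sigma> \<alpha> permutes UNIV"
    and cyc: "\<forall>\<alpha><N. \<forall>j k. D \<alpha> j = 0 \<and> D \<alpha> k = 0 \<and> (\<exists>m. (\<sigma> \<alpha> ^^ m) j = k) \<longrightarrow> j = k"
begin

abbreviation "B \<equiv> basin_union N \<sigma> D"
abbreviation "E \<equiv> omega_edge N \<sigma> D"

lemma edge_iff: "E k j \<longleftrightarrow> j \<noteq> k \<and> (\<exists>\<alpha><N. \<sigma> \<alpha> k = j \<and> D \<alpha> k \<noteq> 0)"
proof -
  have fin: "finite {\<alpha>. \<alpha> < N \<and> \<sigma> \<alpha> k = j}" by simp
  have "omega_weight N \<sigma> D j k = 0 \<longleftrightarrow> (\<forall>\<alpha>\<in>{\<alpha>. \<alpha> < N \<and> \<sigma> \<alpha> k = j}. (cmod (D \<alpha> k))^2 = 0)"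
    unfolding omega_weight_def by (rule sum_nonneg_eq_0_iff[OF fin]) simp
  also have "\<dots> \<longleftrightarrow> \<not> (\<exists>\<alpha><N. \<sigma> \<alpha> k = j \<and> D \<alpha> k \<noteq> 0)" by auto
  finally show ?thesis unfolding omega_edge_def by blast
qed

lemma scc_refl: "k \<in> omega_scc N \<sigma> D k"
  by (simp add: omega_scc_def)

lemma scc_eq: "x \<in> omega_scc N \<sigma> D k \<Longrightarrow> omega_scc N \<sigma> D x = omega_scc N \<sigma> D k"
  unfolding omega_scc_def using rtranclp_trans[of E] by blast

lemma basins_disj: "C1 \<in> basins N \<sigma> D \<Longrightarrow> C2 \<in> basins N \<sigma> D \<Longrightarrow> x \<in> C1 \<Longrightarrow> x \<in> C2 \<Longrightarrow> C1 = C2"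
proof -
  assume a: "C1 \<in> basins N \<sigma> D" "C2 \<in> basins N \<sigma> D" "x \<in> C1" "x \<in> C2"
  obtain k1 where k1: "C1 = omega_scc N \<sigma> D k1" using a(1) by (auto simp: basins_def is_basin_def)
  obtain k2 where k2: "C2 = omega_scc N \<sigma> D k2" using a(2) by (auto simp: basins_def is_basin_def)
  have "omega_scc N \<sigma> D x = C1" using scc_eq a(3) k1 by simp
  moreover have "omega_scc N \<sigma> D x = C2" using scc_eq a(4) k2 by simp
  ultimately show ?thesis by simp
qed

lemma finite_basins: "finite (basins N \<sigma> D)"
  by (rule finite)

lemma PB_eq: "basin_proj N \<sigma> D = diag_proj B"
  unfolding basin_proj_def basin_union_def
  by (rule diag_proj_sum[OF finite_basins basins_disj])

lemma in_B: "x \<in> B \<longleftrightarrow> (\<exists>C\<in>basins N \<sigma> D. x \<in> C)"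
  by (simp add: basin_union_def)

lemma basin_closed: "C \<in> basins N \<sigma> D \<Longrightarrow> j \<in> C \<Longrightarrow> \<alpha> < N \<Longrightarrow> D \<alpha> j \<noteq> 0 \<Longrightarrow> \<sigma> \<alpha> j \<in> C"
proof (cases "\<sigma> \<alpha> j = j")
  case False
  assume a: "C \<in> basins N \<sigma> D" "j \<in> C" "\<alpha> < N" "D \<alpha> j \<noteq> 0"
  then have "E j (\<sigma> \<alpha> j)" using False edge_iff by blast
  then show ?thesis using a unfolding basins_def is_basin_def by blast
qed simp

lemma B_closed: "j \<in> B \<Longrightarrow> \<alpha> < N \<Longrightarrow> D \<alpha> j \<noteq> 0 \<Longrightarrow> \<sigma> \<alpha> j \<in> B"
  using basin_closed in_B by blast

lemma basin_reach: "C \<in> basins N \<sigma> D \<Longrightarrow> x \<in> C \<Longrightarrow> y \<in> C \<Longrightarrow> E\<^sup>*\<^sup>* x y"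
  unfolding basins_def is_basin_def omega_scc_def using rtranclp_trans[of E] by blast

lemma basin_edge_closed: "C \<in> basins N \<sigma> D \<Longrightarrow> x \<in> C \<Longrightarrow> E x y \<Longrightarrow> y \<in> C"
  unfolding basins_def is_basin_def by auto

lemma basin_rtr_closed:
  assumes "C \<in> basins N \<sigma> D" "E\<^sup>*\<^sup>* x y" "x \<in> C" shows "y \<in> C"
  using assms(2,3) by (induction rule: rtranclp_induct) (auto intro: basin_edge_closed[OF assms(1)])

lemma perm_a: "\<alpha> < N \<Longrightarrow> \<sigma> \<alpha> permutes UNIV"
  using perm by blast

lemma inv_s: "\<alpha> < N \<Longrightarrow> inv (\<sigma> \<alpha>) (\<sigma> \<alpha> x) = x"
  by (meson perm_a permutes_inverses(2))

lemma s_inv: "\<alpha> < N \<Longrightarrow> \<sigma> \<alpha> (inv (\<sigma> \<alpha>) x) = x"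
  by (meson perm_a permutes_inverses(1))

lemma s_inj: "\<alpha> < N \<Longrightarrow> \<sigma> \<alpha> x = \<sigma> \<alpha> y \<longleftrightarrow> x = y"
  by (metis inv_s)

end


lemma comm_add: "A ** M = M ** A \<Longrightarrow> B' ** M = M ** B' \<Longrightarrow> (A + B') ** M = M ** (A + (B'::'n::finite cmat))"
  by (simp add: matrix_add_ldistrib matrix_add_rdistrib')

lemma comm_scal: "A ** M = M ** A \<Longrightarrow> (mat c ** A) ** M = M ** (mat c ** (A::'n::finite cmat))"
  by (metis mat_comm matrix_mul_assoc)

lemma comm_diff: "A ** M = M ** A \<Longrightarrow> B' ** M = M ** B' \<Longrightarrow> (A - B') ** M = M ** (A - (B'::'n::finite cmat))"
  by (simp add: matrix_diff_ldistrib matrix_diff_rdistrib)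

lemma comm_one: "mat 1 ** M = M ** (mat 1 :: 'n::finite cmat)"
  by simp

lemma mpoly_offB:
  fixes Y :: "'n::finite cmat"
  assumes sup: "\<And>a b. a \<notin> B \<or> b \<notin> B \<Longrightarrow> Y $ a $ b = 0"
  shows "a \<notin> B \<or> b \<notin> B \<Longrightarrow> mpoly t Y $ a $ b = (if a = b then poly t 0 else 0)"
proof (induction t arbitrary: a b)
  case 0 then show ?case by simp
next
  case (pCons c p)
  have "(Y ** mpoly p Y) $ a $ b = 0"
  proof (cases "a \<in> B")
    case False
    then show ?thesis by (simp add: matmul_entry sup)
  next
    case True
    then have bB: "b \<notin> B" using pCons.prems by simp
    have z: "Y $ a $ k * mpoly p Y $ k $ b = 0" for k
    proof (cases "k \<in> B")
      case True
      then have "k \<noteq> b" using bB by auto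
      then show ?thesis using pCons.IH[of k b] bB by simp
    next
      case False then show ?thesis by (simp add: sup)
    qed
    have "(Y ** mpoly p Y) $ a $ b = (\<Sum>k\<in>UNIV. 0)"
      unfolding matmul_entry z by simp
    then show ?thesis by simp
  qed
  then show ?case by (simp add: mat_entry)
qed

context lsys
begin

lemma finish:
  fixes Y :: "'n cmat" and Hd :: "'n \<Rightarrow> real"
  assumes hY: "cadjoint Y = Y" and nY: "nondiag Y"
    and sup: "\<And>a b. a \<notin> B \<or> b \<notin> B \<Longrightarrow> Y $ a $ b = 0"
    and cL: "\<And>\<alpha>. \<alpha> < N \<Longrightarrow> Y ** (diag_proj B ** lindblad_op (\<sigma> \<alpha>) (D \<alpha>) ** diag_proj B)
                = (diag_proj B ** lindblad_op (\<sigma> \<alpha>) (D \<alpha>) ** diag_proj B) ** Y"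
    and cH: "Y ** (diag_proj B ** diag_mat (\<lambda>j. complex_of_real (Hd j)) ** diag_proj B)
                = (diag_proj B ** diag_mat (\<lambda>j. complex_of_real (Hd j)) ** diag_proj B) ** Y"
  shows "has_hidden_enclosure N \<sigma> D Hd"
proof -
  obtain t where t: "good t Y" using spectral_projector[OF hY nY] by blast
  define Q where "Q = mpoly t Y"
  have QQ: "Q ** Q = Q" and hQ: "cadjoint Q = Q" and nQ: "nondiag Q"
    using t by (auto simp: good_def Q_def)
  have Qoff: "a \<notin> B \<or> b \<notin> B \<Longrightarrow> Q $ a $ b = (if a = b then poly t 0 else 0)" for a b
    unfolding Q_def by (rule mpoly_offB[OF sup])
  have cQ: "Q ** M = M ** Q" if "Y ** M = M ** Y" for M
    unfolding Q_def using mpoly_comm[of M Y t] that by simp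
  define P where "P = (if poly t 0 = 0 then Q else mat 1 - Q)"
  have PP: "P ** P = P"
    by (simp add: P_def QQ matrix_diff_ldistrib matrix_diff_rdistrib)
  have hP: "cadjoint P = P"
    by (simp add: P_def hQ cadj_diff cadj_mat)
  have nP: "nondiag P"
  proof -
    obtain i j where "i \<noteq> j" "Q $ i $ j \<noteq> 0" using nQ nondiag_def by blast
    then show ?thesis unfolding nondiag_def P_def by (auto simp: mat_entry)
  qed
  have cP: "P ** M = M ** P" if "Y ** M = M ** Y" for M
    using cQ[OF that] comm_diff[OF comm_one cQ[OF that]] by (simp add: P_def)
  have Poff: "P $ a $ b = 0" if ab: "a \<notin> B \<or> b \<notin> B" for a b
  proof (cases "poly t 0 = 0")
    case True then show ?thesis using Qoff[OF ab] by (simp add: P_def)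
  next
    case False
    show ?thesis
    proof (cases "a = b")
      case False then show ?thesis using Qoff[OF ab] by (simp add: P_def mat_entry)
    next
      case True
      then have aB: "a \<notin> B" using ab by simp
      have "Q $ a $ a = (\<Sum>k\<in>UNIV. Q $ a $ k * Q $ k $ a)" using QQ by (metis matmul_entry)
      also have "\<dots> = (\<Sum>k\<in>UNIV. if k = a then Q $ a $ a * Q $ a $ a else 0)"
        by (rule sum.cong) (auto simp: Qoff aB)
      also have "\<dots> = Q $ a $ a * Q $ a $ a" by simp
      finally have "poly t 0 = poly t 0 * poly t 0" using Qoff[of a a] aB by simp
      then have "poly t 0 = 1" using False by (metis mult_cancel_left1)
      then show ?thesis using Qoff[OF ab] True False by (simp add: P_def mat_entry)
    qed
  qed
  have PBP: "diag_proj B ** P = P"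
    by (simp add: vec_eq_iff dp_left Poff)
  show ?thesis
    unfolding has_hidden_enclosure_def Let_def PB_eq
  proof (intro exI[of _ P] conjI)
    show "orth_projector P" using PP hP by (simp add: orth_projector_def)
    show "mat_range P \<subseteq> mat_range (diag_proj B)"
    proof
      fix w assume "w \<in> mat_range P"
      then obtain v where "w = P *v v" by (auto simp: mat_range_def)
      then have "w = diag_proj B *v (P *v v)" using PBP by (simp add: matrix_vector_mul_assoc)
      then show "w \<in> mat_range (diag_proj B)" by (auto simp: mat_range_def)
    qed
    show "mat_commute P (diag_proj B ** diag_mat (\<lambda>j. complex_of_real (Hd j)) ** diag_proj B)"
      unfolding mat_commute_def using cP[OF cH] .
    show "\<forall>\<alpha><N. mat_commute P (diag_proj B ** lindblad_op (\<sigma> \<alpha>) (D \<alpha>) ** diag_proj B)"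
      unfolding mat_commute_def using cP cL by blast
    show "\<not> (\<exists>S\<subseteq>basins N \<sigma> D. P = (\<Sum>C\<in>S. diag_proj C))"
    proof
      assume "\<exists>S\<subseteq>basins N \<sigma> D. P = (\<Sum>C\<in>S. diag_proj C)"
      then obtain S where "P = (\<Sum>C\<in>S. diag_proj C)" by blast
      then show False using nP sum_diag_proj_diag unfolding nondiag_def by metis
    qed
  qed
qed

end


lemma coh_edge_swap:
  assumes "sym R"
  shows "coh_edge N \<sigma> D R (prod.swap x) \<alpha> (prod.swap y) \<longleftrightarrow> coh_edge N \<sigma> D R x \<alpha> y"
  using assms unfolding coh_edge_def coh_vertices_def sym_def by auto

lemma coh_adj_swap:
  assumes "sym R"
  shows "coh_adj N \<sigma> D R (prod.swap x) (prod.swap y) \<longleftrightarrow> coh_adj N \<sigma> D R x y"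
  unfolding coh_adj_def using coh_edge_swap[OF assms] by blast

lemma coh_weight_swap: "coh_weight D \<alpha> (prod.swap x) = cnj (coh_weight D \<alpha> x)"
  by (simp add: coh_weight_def mult.commute)

lemma cnj_mult_self: "cnj z * z = complex_of_real ((cmod z)^2)"
  by (metis complex_norm_square mult.commute)

definition cmatr :: "('n \<times> 'n) set \<Rightarrow> ('n \<times> 'n \<Rightarrow> complex) \<Rightarrow> 'n::finite cmat" where
  "cmatr C h = (\<chi> a b. if (a, b) \<in> C then h (a, b) else 0)"

lemma cmatr_entry: "cmatr C h $ a $ b = (if (a, b) \<in> C then h (a, b) else 0)"
  by (simp add: cmatr_def)

locale bctx = lsys N \<sigma> D for N and \<sigma> :: "nat \<Rightarrow> 'n::finite \<Rightarrow> 'n" and D +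
  fixes Hd :: "'n \<Rightarrow> real" and Ns :: "'n set" and R :: "('n \<times> 'n) set" and \<nu> :: nat
  assumes Ns: "Ns \<subseteq> B" and U: "uniform_equiv Ns R \<nu>" and nu: "\<nu> \<ge> 2"
    and Hs: "\<forall>(j, k)\<in>R. Hd j = Hd k"
    and Ds: "\<forall>\<alpha><N. \<forall>(j, k)\<in>R. cmod (D \<alpha> j) = cmod (D \<alpha> k)
            \<and> (\<sigma> \<alpha> j \<in> B \<and> \<sigma> \<alpha> k \<in> B \<longrightarrow> (\<sigma> \<alpha> j, \<sigma> \<alpha> k) \<in> R)"
begin

lemma eqv: "equiv Ns R" using U by (simp add: uniform_equiv_def)

lemma R_sub: "(a, b) \<in> R \<Longrightarrow> a \<in> Ns \<and> b \<in> Ns"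
  using eqv unfolding equiv_def refl_on_def by blast

lemma R_sym: "(a, b) \<in> R \<Longrightarrow> (b, a) \<in> R"
  using eqv unfolding equiv_def sym_def by blast

lemma R_symm: "sym R" using eqv by (simp add: equiv_def)

lemma R_refl: "a \<in> Ns \<Longrightarrow> (a, a) \<in> R"
  using eqv unfolding equiv_def refl_on_def by blast

lemma R_D: "(j, k) \<in> R \<Longrightarrow> \<alpha> < N \<Longrightarrow> cmod (D \<alpha> j) = cmod (D \<alpha> k)"
  using Ds by blast

lemma R_s: "(j, k) \<in> R \<Longrightarrow> \<alpha> < N \<Longrightarrow> \<sigma> \<alpha> j \<in> B \<Longrightarrow> \<sigma> \<alpha> k \<in> B \<Longrightarrow> (\<sigma> \<alpha> j, \<sigma> \<alpha> k) \<in> R"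
  using Ds by blast

lemma class_card: "a \<in> Ns \<Longrightarrow> card (R `` {a}) = \<nu>"
  using U unfolding uniform_equiv_def by (simp add: quotientI)

lemma partner: assumes "z \<in> Ns" shows "\<exists>z'. (z, z') \<in> R \<and> z' \<noteq> z"
proof (rule ccontr)
  assume "\<not> ?thesis"
  then have "R `` {z} \<subseteq> {z}" by auto
  then have "card (R `` {z}) \<le> card {z}" by (intro card_mono) auto
  then have "card (R `` {z}) \<le> 1" by simp
  then show False using class_card[OF assms] nu by simp
qed

lemma Ns_closed: "z \<in> Ns \<Longrightarrow> \<alpha> < N \<Longrightarrow> D \<alpha> z \<noteq> 0 \<Longrightarrow> \<sigma> \<alpha> z \<in> Ns"
proof -
  assume a: "z \<in> Ns" "\<alpha> < N" "D \<alpha> z \<noteq> 0"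
  obtain z' where z': "(z, z') \<in> R" using partner[OF a(1)] by blast
  have "D \<alpha> z' \<noteq> 0" using R_D[OF z' a(2)] a(3) by auto
  moreover have "z' \<in> Ns" using R_sub[OF z'] by simp
  ultimately have "\<sigma> \<alpha> z \<in> B" "\<sigma> \<alpha> z' \<in> B" using B_closed a Ns by auto
  then have "(\<sigma> \<alpha> z, \<sigma> \<alpha> z') \<in> R" using R_s[OF z' a(2)] by blast
  then show ?thesis using R_sub by blast
qed

lemma Ns_rtr: "E\<^sup>*\<^sup>* z w \<Longrightarrow> z \<in> Ns \<Longrightarrow> w \<in> Ns"
proof (induction rule: rtranclp_induct)
  case base then show ?case by simp
next
  case (step y w)
  then obtain \<alpha> where "\<alpha> < N" "\<sigma> \<alpha> y = w" "D \<alpha> y \<noteq> 0" using edge_iff by blast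
  then show ?case using Ns_closed step by blast
qed

lemma Ns_back: assumes "y \<in> B" "\<alpha> < N" "D \<alpha> y \<noteq> 0" "\<sigma> \<alpha> y \<in> Ns" shows "y \<in> Ns"
proof -
  obtain C0 where C0: "C0 \<in> basins N \<sigma> D" "y \<in> C0" using assms(1) in_B by blast
  have "\<sigma> \<alpha> y \<in> C0" using basin_closed[OF C0 assms(2,3)] .
  then have "E\<^sup>*\<^sup>* (\<sigma> \<alpha> y) y" using basin_reach[OF C0(1)] C0(2) by blast
  then show ?thesis using Ns_rtr assms(4) by blast
qed

lemma class_onto:
  assumes y: "y \<in> Ns" and a: "\<alpha> < N" and d: "D \<alpha> y \<noteq> 0" and x: "(x, \<sigma> \<alpha> y) \<in> R"
  shows "\<exists>u. (u, y) \<in> R \<and> \<sigma> \<alpha> u = x"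
proof -
  let ?cy = "R `` {y}" and ?cs = "R `` {\<sigma> \<alpha> y}"
  have sub: "\<sigma> \<alpha> ` ?cy \<subseteq> ?cs"
  proof
    fix w assume "w \<in> \<sigma> \<alpha> ` ?cy"
    then obtain u where u: "(y, u) \<in> R" "w = \<sigma> \<alpha> u" by auto
    have "D \<alpha> u \<noteq> 0" using R_D[OF u(1) a] d by auto
    moreover have "u \<in> Ns" using R_sub[OF u(1)] by simp
    ultimately have "\<sigma> \<alpha> u \<in> B" using B_closed a Ns by auto
    moreover have "\<sigma> \<alpha> y \<in> B" using B_closed a Ns y d by auto
    ultimately show "w \<in> ?cs" using R_s[OF u(1) a] u(2) by auto
  qed
  have "inj_on (\<sigma> \<alpha>) ?cy" using s_inj[OF a] by (simp add: inj_on_def)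
  then have c1: "card (\<sigma> \<alpha> ` ?cy) = \<nu>" using class_card[OF y] by (simp add: card_image)
  have sy: "\<sigma> \<alpha> y \<in> Ns" using Ns_closed[OF y a d] .
  have c2: "card ?cs = \<nu>" using class_card[OF sy] .
  have "\<sigma> \<alpha> ` ?cy = ?cs" by (rule card_subset_eq) (use sub c1 c2 in auto)
  moreover have "x \<in> ?cs" using R_sym[OF x] by simp
  ultimately obtain u where "u \<in> ?cy" "x = \<sigma> \<alpha> u" by (metis imageE)
  then show ?thesis using R_sym by auto
qed

lemma GCL_L:
  assumes Cv: "C \<subseteq> coh_vertices R" and Ccl: "\<And>x y. x \<in> C \<Longrightarrow> coh_adj N \<sigma> D R x y \<Longrightarrow> y \<in> C"
    and Ch: "\<And>x \<alpha> y. x \<in> C \<Longrightarrow> coh_edge N \<sigma> D R x \<alpha> y \<Longrightarrow> h y = coh_weight D \<alpha> x * h x"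
    and \<alpha>: "\<alpha> < N"
  shows "cmatr C h ** (diag_proj B ** lindblad_op (\<sigma> \<alpha>) (D \<alpha>) ** diag_proj B)
       = (diag_proj B ** lindblad_op (\<sigma> \<alpha>) (D \<alpha>) ** diag_proj B) ** cmatr C h"
proof -
  let ?s = "\<sigma> \<alpha>" and ?d = "D \<alpha>"
  have CR: "x \<in> C \<Longrightarrow> x \<in> R \<and> fst x \<noteq> snd x" for x using Cv by (auto simp: coh_vertices_def)
  have "(if b \<in> B \<and> ?s b \<in> B then cmatr C h $ a $ (?s b) * ?d b else 0)
      = (if a \<in> B \<and> inv ?s a \<in> B then ?d (inv ?s a) * cmatr C h $ (inv ?s a) $ b else 0)" for a b
  proof -
    define u where "u = inv ?s a"
    have su: "?s u = a" using s_inv[OF \<alpha>] u_def by simp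
    show ?thesis
    proof (cases "(a, ?s b) \<in> C")
      case True
      have aR: "(a, ?s b) \<in> R" "a \<noteq> ?s b" using CR[OF True] by auto
      have aN: "a \<in> Ns" "?s b \<in> Ns" using R_sub[OF aR(1)] by auto
      show ?thesis
      proof (cases "b \<in> B")
        case False
        have "(u, b) \<notin> C" using False CR R_sub Ns by fastforce
        then show ?thesis using False by (simp add: cmatr_entry u_def)
      next
        case bB: True
        show ?thesis
        proof (cases "?d b = 0")
          case True
          have "?d u * cmatr C h $ u $ b = 0"
          proof (cases "(u, b) \<in> C")
            case True
            then have "cmod (?d u) = cmod (?d b)" using CR R_D \<alpha> by fastforce
            then show ?thesis using \<open>?d b = 0\<close> by simp
          qed (simp add: cmatr_entry)
          then show ?thesis using True by (simp add: u_def)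
        next
          case False
          have bN: "b \<in> Ns" using Ns_back[OF bB \<alpha> False aN(2)] .
          obtain u' where u': "(u', b) \<in> R" "?s u' = a" using class_onto[OF bN \<alpha> False aR(1)] by blast
          have uu: "u' = u" using u' su s_inj[OF \<alpha>] by metis
          have uR: "(u, b) \<in> R" using u' uu by simp
          have du: "cmod (?d u) = cmod (?d b)" using R_D[OF uR \<alpha>] .
          have dun: "?d u \<noteq> 0" using du False by auto
          have ub: "u \<noteq> b" using aR(2) su by auto
          have uN: "u \<in> Ns" using R_sub[OF uR] by simp
          have edge: "coh_edge N \<sigma> D R (u, b) \<alpha> (a, ?s b)"
            using \<alpha> uR ub aR su dun False by (simp add: coh_edge_def coh_vertices_def)
          have "coh_adj N \<sigma> D R (a, ?s b) (u, b)" using edge coh_adj_def by blast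
          then have uC: "(u, b) \<in> C" using Ccl[OF True] by blast
          have hh: "h (a, ?s b) = coh_weight D \<alpha> (u, b) * h (u, b)" using Ch[OF uC edge] .
          have w: "coh_weight D \<alpha> (u, b) * ?d b = ?d u"
          proof -
            have "coh_weight D \<alpha> (u, b) * ?d b = ?d u * (cnj (?d b) * ?d b) / complex_of_real (cmod (?d u) * cmod (?d b))"
              by (simp add: coh_weight_def mult_ac)
            also have "\<dots> = ?d u" using du False
              by (simp add: cnj_mult_self power2_eq_square)
            finally show ?thesis .
          qed
          have "cmatr C h $ a $ (?s b) * ?d b = ?d u * cmatr C h $ u $ b"
            using True uC hh w by (simp add: cmatr_entry mult_ac)
          moreover have "a \<in> B" "u \<in> B" using aN uN Ns by auto
          ultimately show ?thesis using bB aN Ns by (auto simp: u_def)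
        qed
      qed
    next
      case False
      have "?d u * cmatr C h $ u $ b = 0" if "a \<in> B" "u \<in> B"
      proof (rule ccontr)
        assume nz: "?d u * cmatr C h $ u $ b \<noteq> 0"
        then have uC: "(u, b) \<in> C" by (auto simp: cmatr_entry split: if_splits)
        have dun: "?d u \<noteq> 0" using nz by auto
        have uR: "(u, b) \<in> R" "u \<noteq> b" using CR[OF uC] by auto
        have dbn: "?d b \<noteq> 0" using R_D[OF uR(1) \<alpha>] dun by auto
        have uN: "u \<in> Ns" "b \<in> Ns" using R_sub[OF uR(1)] by auto
        have "?s u \<in> B" "?s b \<in> B" using B_closed \<alpha> uN Ns dun dbn by auto
        then have sR: "(a, ?s b) \<in> R" using R_s[OF uR(1) \<alpha>] su by simp
        have "a \<noteq> ?s b" using su uR(2) s_inj[OF \<alpha>] by metis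
        then have edge: "coh_edge N \<sigma> D R (u, b) \<alpha> (a, ?s b)"
          using \<alpha> uR sR su dun dbn by (simp add: coh_edge_def coh_vertices_def)
        then have "(a, ?s b) \<in> C" using Ccl[OF uC] coh_adj_def by blast
        then show False using False by simp
      qed
      then show ?thesis using False by (auto simp: cmatr_entry u_def)
    qed
  qed
  then show ?thesis
    by (simp add: vec_eq_iff comm_L_right comm_L_left[OF perm_a[OF \<alpha>]])
qed

lemma GCL_H:
  assumes Cv: "C \<subseteq> coh_vertices R"
  shows "cmatr C h ** (diag_proj B ** diag_mat (\<lambda>j. complex_of_real (Hd j)) ** diag_proj B)
       = (diag_proj B ** diag_mat (\<lambda>j. complex_of_real (Hd j)) ** diag_proj B) ** cmatr C h"
proof -
  have "(if b \<in> B then cmatr C h $ a $ b * complex_of_real (Hd b) else 0)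
      = (if a \<in> B then complex_of_real (Hd a) * cmatr C h $ a $ b else 0)" for a b
  proof (cases "(a, b) \<in> C")
    case True
    then have "(a, b) \<in> R" using Cv by (auto simp: coh_vertices_def)
    then have "a \<in> B" "b \<in> B" "Hd a = Hd b" using R_sub Ns Hs by auto
    then show ?thesis by (simp add: mult.commute)
  qed (simp add: cmatr_entry)
  then show ?thesis
    by (simp add: vec_eq_iff comm_H_right comm_H_left)
qed

lemma herm_support_comm:
  fixes X :: "'n cmat"
  assumes sX: "\<And>a b. a \<notin> B \<or> b \<notin> B \<Longrightarrow> X $ a $ b = 0"
    and cX: "\<And>M. M \<in> Ms \<Longrightarrow> X ** M = M ** X"
    and cX': "\<And>M. M \<in> Ms \<Longrightarrow> cadjoint X ** M = M ** cadjoint X"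
    and j0: "j0 \<noteq> k0" "X $ j0 $ k0 \<noteq> 0"
  shows "\<exists>Y. cadjoint Y = Y \<and> nondiag Y \<and> (\<forall>a b. a \<notin> B \<or> b \<notin> B \<longrightarrow> Y $ a $ b = 0)
     \<and> (\<forall>M\<in>Ms. Y ** M = M ** Y)"
proof -
  define Y1 where "Y1 = X + cadjoint X"
  define Y2 where "Y2 = mat \<i> ** X - mat \<i> ** cadjoint X"
  have e1: "Y1 $ a $ b = X $ a $ b + cnj (X $ b $ a)" for a b by (simp add: Y1_def cadj_entry)
  have e2: "Y2 $ a $ b = \<i> * X $ a $ b - \<i> * cnj (X $ b $ a)" for a b
    by (simp add: Y2_def cadj_entry mat_mult_left)
  have h1: "cadjoint Y1 = Y1" by (simp add: vec_eq_iff cadj_entry e1 add.commute)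
  have h2: "cadjoint Y2 = Y2" by (simp add: vec_eq_iff cadj_entry e2 algebra_simps)
  have s1: "\<forall>a b. a \<notin> B \<or> b \<notin> B \<longrightarrow> Y1 $ a $ b = 0" using sX by (auto simp: e1)
  have s2: "\<forall>a b. a \<notin> B \<or> b \<notin> B \<longrightarrow> Y2 $ a $ b = 0" using sX by (auto simp: e2)
  have c1: "\<forall>M\<in>Ms. Y1 ** M = M ** Y1" unfolding Y1_def using cX cX' comm_add by blast
  have c2: "\<forall>M\<in>Ms. Y2 ** M = M ** Y2" unfolding Y2_def using cX cX' comm_diff comm_scal by blast
  have "Y1 $ j0 $ k0 \<noteq> 0 \<or> Y2 $ j0 $ k0 \<noteq> 0"
  proof (rule ccontr)
    assume "\<not> ?thesis"
    then have a: "X $ j0 $ k0 + cnj (X $ k0 $ j0) = 0" "\<i> * X $ j0 $ k0 - \<i> * cnj (X $ k0 $ j0) = 0"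
      by (auto simp: e1 e2)
    from a(2) have "X $ j0 $ k0 = cnj (X $ k0 $ j0)" by (simp add: right_diff_distrib[symmetric])
    with a(1) have "2 * X $ j0 $ k0 = 0" by simp
    then show False using j0 by simp
  qed
  then show ?thesis
  proof
    assume "Y1 $ j0 $ k0 \<noteq> 0"
    then have "nondiag Y1" using j0 nondiag_def by blast
    then show ?thesis using h1 s1 c1 by blast
  next
    assume "Y2 $ j0 $ k0 \<noteq> 0"
    then have "nondiag Y2" using j0 nondiag_def by blast
    then show ?thesis using h2 s2 c2 by blast
  qed
qed

lemma back_main:
  assumes comp: "coh_component N \<sigma> D R C" and res: "resonant N \<sigma> D R C"
  shows "has_hidden_enclosure N \<sigma> D Hd"
proof -
  obtain x0 where x0: "x0 \<in> coh_vertices R" and Cdef: "C = {y. (coh_adj N \<sigma> D R)\<^sup>*\<^sup>* x0 y}"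
    using comp unfolding coh_component_def by blast
  obtain f where f1: "\<forall>x\<in>C. \<forall>y\<in>C. cmod (f x y) = 1"
    and f2: "\<forall>x\<in>C. \<forall>y\<in>C. \<forall>z\<in>C. f x y * f y z = f x z"
    and f3: "\<forall>x y \<alpha>. x \<in> C \<longrightarrow> y \<in> C \<longrightarrow> coh_edge N \<sigma> D R x \<alpha> y \<longrightarrow> f x y = coh_weight D \<alpha> x"
    using res unfolding resonant_def by blast
  have x0C: "x0 \<in> C" using Cdef by simp
  have Ccl: "y \<in> C" if "x \<in> C" "coh_adj N \<sigma> D R x y" for x y
  proof -
    have "(coh_adj N \<sigma> D R)\<^sup>*\<^sup>* x0 x" using that(1) Cdef by simp
    then have "(coh_adj N \<sigma> D R)\<^sup>*\<^sup>* x0 y" using that(2) by (rule rtranclp.rtrancl_into_rtrancl)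
    then show ?thesis using Cdef by simp
  qed
  have Cv: "C \<subseteq> coh_vertices R"
  proof
    fix y assume "y \<in> C"
    then have "(coh_adj N \<sigma> D R)\<^sup>*\<^sup>* x0 y" using Cdef by simp
    then show "y \<in> coh_vertices R"
    proof (induction rule: rtranclp_induct)
      case base then show ?case using x0 .
    next
      case (step y z)
      then show ?case unfolding coh_adj_def coh_edge_def by blast
    qed
  qed
  define h where "h x = f x0 x" for x
  have Ch: "h y = coh_weight D \<alpha> x * h x" if "x \<in> C" "coh_edge N \<sigma> D R x \<alpha> y" for x \<alpha> y
  proof -
    have yC: "y \<in> C" using Ccl[OF that(1)] that(2) coh_adj_def by blast
    have "f x0 x * f x y = f x0 y" using f2 x0C that(1) yC by blast
    moreover have "f x y = coh_weight D \<alpha> x" using f3 that yC by blast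
    ultimately show ?thesis by (simp add: h_def mult.commute)
  qed
  define C' where "C' = prod.swap ` C"
  define h' where "h' x = cnj (h (prod.swap x))" for x
  have Cv': "C' \<subseteq> coh_vertices R"
    using Cv R_sym unfolding C'_def coh_vertices_def by auto
  have Ccl': "y \<in> C'" if "x \<in> C'" "coh_adj N \<sigma> D R x y" for x y
  proof -
    have "prod.swap x \<in> C" using that(1) C'_def by auto
    moreover have "coh_adj N \<sigma> D R (prod.swap x) (prod.swap y)" using that(2) coh_adj_swap[OF R_symm] by blast
    ultimately have "prod.swap y \<in> C" using Ccl by blast
    then show ?thesis unfolding C'_def by (metis image_eqI swap_swap)
  qed
  have Ch': "h' y = coh_weight D \<alpha> x * h' x" if "x \<in> C'" "coh_edge N \<sigma> D R x \<alpha> y" for x \<alpha> y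
  proof -
    have "prod.swap x \<in> C" using that(1) C'_def by auto
    moreover have "coh_edge N \<sigma> D R (prod.swap x) \<alpha> (prod.swap y)" using that(2) coh_edge_swap[OF R_symm] by blast
    ultimately have "h (prod.swap y) = coh_weight D \<alpha> (prod.swap x) * h (prod.swap x)" using Ch by blast
    then have "h' y = cnj (coh_weight D \<alpha> (prod.swap x)) * h' x" by (simp add: h'_def)
    then show ?thesis using coh_weight_swap[of D \<alpha> x] by simp
  qed
  define X where "X = cmatr C h"
  have adjX: "cadjoint X = cmatr C' h'"
  proof -
    have sw: "(a, b) \<in> prod.swap ` C \<longleftrightarrow> (b, a) \<in> C" for a b by force
    show ?thesis by (simp add: vec_eq_iff cadj_entry X_def cmatr_entry C'_def h'_def sw)
  qed
  let ?Ms = "{diag_proj B ** diag_mat (\<lambda>j. complex_of_real (Hd j)) ** diag_proj B} \<union>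
             {diag_proj B ** lindblad_op (\<sigma> \<alpha>) (D \<alpha>) ** diag_proj B | \<alpha>. \<alpha> < N}"
  have GL: "cmatr C h ** (diag_proj B ** lindblad_op (\<sigma> \<alpha>) (D \<alpha>) ** diag_proj B)
       = (diag_proj B ** lindblad_op (\<sigma> \<alpha>) (D \<alpha>) ** diag_proj B) ** cmatr C h" if "\<alpha> < N" for \<alpha>
  proof (rule GCL_L[OF Cv])
    show "\<And>x y. x \<in> C \<Longrightarrow> coh_adj N \<sigma> D R x y \<Longrightarrow> y \<in> C" by (rule Ccl)
    show "\<And>x \<alpha> y. x \<in> C \<Longrightarrow> coh_edge N \<sigma> D R x \<alpha> y \<Longrightarrow> h y = coh_weight D \<alpha> x * h x" by (rule Ch)
    show "\<alpha> < N" by (rule that)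
  qed
  have GL': "cmatr C' h' ** (diag_proj B ** lindblad_op (\<sigma> \<alpha>) (D \<alpha>) ** diag_proj B)
       = (diag_proj B ** lindblad_op (\<sigma> \<alpha>) (D \<alpha>) ** diag_proj B) ** cmatr C' h'" if "\<alpha> < N" for \<alpha>
  proof (rule GCL_L[OF Cv'])
    show "\<And>x y. x \<in> C' \<Longrightarrow> coh_adj N \<sigma> D R x y \<Longrightarrow> y \<in> C'" by (rule Ccl')
    show "\<And>x \<alpha> y. x \<in> C' \<Longrightarrow> coh_edge N \<sigma> D R x \<alpha> y \<Longrightarrow> h' y = coh_weight D \<alpha> x * h' x" by (rule Ch')
    show "\<alpha> < N" by (rule that)
  qed
  have cX: "X ** M = M ** X" if "M \<in> ?Ms" for M
    using that GCL_H[OF Cv, of h] GL unfolding X_def by auto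
  have cX': "cadjoint X ** M = M ** cadjoint X" if "M \<in> ?Ms" for M
    using that GCL_H[OF Cv', of h'] GL' unfolding adjX by auto
  have sX: "X $ a $ b = 0" if "a \<notin> B \<or> b \<notin> B" for a b
  proof (rule ccontr)
    assume "X $ a $ b \<noteq> 0"
    then have "(a, b) \<in> C" by (auto simp: X_def cmatr_entry split: if_splits)
    then have "(a, b) \<in> R" using Cv by (auto simp: coh_vertices_def)
    then show False using that R_sub Ns by auto
  qed
  obtain j0 k0 where jk: "x0 = (j0, k0)" by (cases x0)
  have jk0: "j0 \<noteq> k0" using x0 jk by (simp add: coh_vertices_def)
  have "cmod (h x0) = 1" using f1 x0C h_def by simp
  then have "X $ j0 $ k0 \<noteq> 0" using x0C jk by (auto simp: X_def cmatr_entry)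
  then obtain Y where Y: "cadjoint Y = Y" "nondiag Y" "\<forall>a b. a \<notin> B \<or> b \<notin> B \<longrightarrow> Y $ a $ b = 0"
      "\<forall>M\<in>?Ms. Y ** M = M ** Y"
    using herm_support_comm[of X ?Ms j0 k0] sX cX cX' jk0 by blast
  show ?thesis
    by (rule finish[OF Y(1,2)]) (use Y(3,4) in auto)
qed

end


lemma mult_axis: "((A::'n::finite cmat) *v axis b 1) $ a = A $ a $ b"
proof -
  have "(A *v axis b 1) $ a = (\<Sum>j\<in>UNIV. A $ a $ j * axis b 1 $ j)"
    by (simp add: matrix_vector_mult_def)
  also have "\<dots> = (\<Sum>j\<in>UNIV. if j = b then A $ a $ b else 0)"
    by (rule sum.cong) (auto simp: axis_def)
  finally show ?thesis by simp
qed

lemma dp_vec: "(diag_proj B *v (x::complex^'n::finite)) $ a = (if a \<in> B then x $ a else 0)"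
proof -
  have "(diag_proj B *v x) $ a = (\<Sum>j\<in>UNIV. diag_proj B $ a $ j * x $ j)"
    by (simp add: matrix_vector_mult_def)
  also have "\<dots> = (\<Sum>j\<in>UNIV. if j = a then (if a \<in> B then x $ a else 0) else 0)"
    by (rule sum.cong) (auto simp: diag_proj_entry)
  finally show ?thesis by simp
qed


lemma cw_norm: "D \<alpha> a \<noteq> 0 \<Longrightarrow> D \<alpha> b \<noteq> 0 \<Longrightarrow> cmod (coh_weight D \<alpha> (a, b)) = 1"
  by (simp add: coh_weight_def norm_mult norm_divide)

locale fctx = lsys N \<sigma> D for N and \<sigma> :: "nat \<Rightarrow> 'n::finite \<Rightarrow> 'n" and D +
  fixes Hd :: "'n \<Rightarrow> real" and P :: "'n cmat"
  assumes oP: "orth_projector P" and rP: "mat_range P \<subseteq> mat_range (diag_proj B)"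
    and cH: "mat_commute P (diag_proj B ** diag_mat (\<lambda>j. complex_of_real (Hd j)) ** diag_proj B)"
    and cL: "\<forall>\<alpha><N. mat_commute P (diag_proj B ** lindblad_op (\<sigma> \<alpha>) (D \<alpha>) ** diag_proj B)"
    and nS: "\<not> (\<exists>S\<subseteq>basins N \<sigma> D. P = (\<Sum>C\<in>S. diag_proj C))"
begin

lemma PP: "P ** P = P" using oP by (simp add: orth_projector_def)
lemma hP: "cadjoint P = P" using oP by (simp add: orth_projector_def)

lemma Pcnj: "cnj (P $ a $ b) = P $ b $ a" by (rule herm_cnj[OF hP])

lemma Poff1: "a \<notin> B \<Longrightarrow> P $ a $ b = 0"
proof -
  assume a: "a \<notin> B"
  have "P *v axis b 1 \<in> mat_range P" by (simp add: mat_range_def)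
  then have "P *v axis b 1 \<in> mat_range (diag_proj B)" using rP by blast
  then obtain x where "P *v axis b 1 = diag_proj B *v x" by (auto simp: mat_range_def)
  then have "(P *v axis b 1) $ a = (diag_proj B *v x) $ a" by simp
  then show ?thesis using a by (simp add: mult_axis dp_vec)
qed

lemma Poff: assumes "a \<notin> B \<or> b \<notin> B" shows "P $ a $ b = 0"
proof (cases "a \<in> B")
  case False then show ?thesis by (rule Poff1)
next
  case True
  then have "b \<notin> B" using assms by simp
  then have "P $ b $ a = 0" by (rule Poff1)
  then show ?thesis using Pcnj[of b a] by simp
qed

definition S :: "'n \<Rightarrow> 'n \<Rightarrow> bool" where "S a b \<longleftrightarrow> P $ a $ b \<noteq> 0"

lemma S_B: "S a b \<Longrightarrow> a \<in> B \<and> b \<in> B" using Poff S_def by blast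

lemma S_sym: "S a b \<Longrightarrow> S b a" unfolding S_def by (metis Pcnj complex_cnj_zero)

lemma EL: "\<alpha> < N \<Longrightarrow> (if b \<in> B \<and> \<sigma> \<alpha> b \<in> B then P $ a $ (\<sigma> \<alpha> b) * D \<alpha> b else 0)
   = (if a \<in> B \<and> inv (\<sigma> \<alpha>) a \<in> B then D \<alpha> (inv (\<sigma> \<alpha>) a) * P $ (inv (\<sigma> \<alpha>) a) $ b else 0)"
proof -
  assume a: "\<alpha> < N"
  have "P ** (diag_proj B ** lindblad_op (\<sigma> \<alpha>) (D \<alpha>) ** diag_proj B)
      = (diag_proj B ** lindblad_op (\<sigma> \<alpha>) (D \<alpha>) ** diag_proj B) ** P"
    using cL a by (simp add: mat_commute_def)
  then have "(P ** (diag_proj B ** lindblad_op (\<sigma> \<alpha>) (D \<alpha>) ** diag_proj B)) $ a $ b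
      = ((diag_proj B ** lindblad_op (\<sigma> \<alpha>) (D \<alpha>) ** diag_proj B) ** P) $ a $ b" by simp
  then show ?thesis by (simp only: comm_L_right comm_L_left[OF perm_a[OF a]])
qed

lemma E1: assumes "\<alpha> < N" "j \<in> B" "k \<in> B"
  shows "P $ (\<sigma> \<alpha> j) $ (\<sigma> \<alpha> k) * D \<alpha> k = D \<alpha> j * P $ j $ k"
proof -
  have e: "(if k \<in> B \<and> \<sigma> \<alpha> k \<in> B then P $ (\<sigma> \<alpha> j) $ (\<sigma> \<alpha> k) * D \<alpha> k else 0)
   = (if \<sigma> \<alpha> j \<in> B \<and> j \<in> B then D \<alpha> j * P $ j $ k else 0)"
    using EL[OF assms(1), of k "\<sigma> \<alpha> j"] by (simp add: inv_s[OF assms(1)])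
  have l: "(if k \<in> B \<and> \<sigma> \<alpha> k \<in> B then P $ (\<sigma> \<alpha> j) $ (\<sigma> \<alpha> k) * D \<alpha> k else 0)
      = P $ (\<sigma> \<alpha> j) $ (\<sigma> \<alpha> k) * D \<alpha> k"
    using assms(3) Poff by auto
  have r: "(if \<sigma> \<alpha> j \<in> B \<and> j \<in> B then D \<alpha> j * P $ j $ k else 0) = D \<alpha> j * P $ j $ k"
    using assms B_closed by auto
  show ?thesis using e l r by simp
qed

lemma E3: assumes "\<alpha> < N" "j \<in> B" "D \<alpha> j \<noteq> 0"
  shows "P $ x $ (\<sigma> \<alpha> j) * D \<alpha> j
     = (if x \<in> B \<and> inv (\<sigma> \<alpha>) x \<in> B then D \<alpha> (inv (\<sigma> \<alpha>) x) * P $ (inv (\<sigma> \<alpha>) x) $ j else 0)"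
  using EL[OF assms(1), of j x] B_closed[OF assms(2,1,3)] assms(2) by simp

lemma S_H: assumes "S a b" shows "Hd a = Hd b"
proof -
  have "P ** (diag_proj B ** diag_mat (\<lambda>j. complex_of_real (Hd j)) ** diag_proj B)
      = (diag_proj B ** diag_mat (\<lambda>j. complex_of_real (Hd j)) ** diag_proj B) ** P"
    using cH by (simp add: mat_commute_def)
  then have "(P ** (diag_proj B ** diag_mat (\<lambda>j. complex_of_real (Hd j)) ** diag_proj B)) $ a $ b
      = ((diag_proj B ** diag_mat (\<lambda>j. complex_of_real (Hd j)) ** diag_proj B) ** P) $ a $ b" by simp
  then have "(if b \<in> B then P $ a $ b * complex_of_real (Hd b) else 0)
      = (if a \<in> B then complex_of_real (Hd a) * P $ a $ b else 0)"
    by (simp only: comm_H_right comm_H_left)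
  then have "P $ a $ b * complex_of_real (Hd b) = complex_of_real (Hd a) * P $ a $ b"
    using S_B[OF assms] by simp
  then show ?thesis using assms S_def by (simp add: mult.commute)
qed

lemma S_D: assumes "S a b" "\<alpha> < N" shows "cmod (D \<alpha> a) = cmod (D \<alpha> b)"
proof -
  have aB: "a \<in> B" "b \<in> B" using S_B[OF assms(1)] by auto
  let ?Q = "P $ (\<sigma> \<alpha> a) $ (\<sigma> \<alpha> b)" and ?p = "P $ a $ b"
  have e1: "?Q * D \<alpha> b = D \<alpha> a * ?p" using E1[OF assms(2) aB] .
  have e2: "P $ (\<sigma> \<alpha> b) $ (\<sigma> \<alpha> a) * D \<alpha> a = D \<alpha> b * P $ b $ a" using E1[OF assms(2) aB(2,1)] .
  then have "cnj (P $ (\<sigma> \<alpha> b) $ (\<sigma> \<alpha> a) * D \<alpha> a) = cnj (D \<alpha> b * P $ b $ a)" by simp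
  then have e2': "?Q * cnj (D \<alpha> a) = cnj (D \<alpha> b) * ?p" by (simp add: Pcnj)
  have "(D \<alpha> a * ?p) * cnj (D \<alpha> a) = (cnj (D \<alpha> b) * ?p) * D \<alpha> b"
  proof -
    have "(D \<alpha> a * ?p) * cnj (D \<alpha> a) = (?Q * D \<alpha> b) * cnj (D \<alpha> a)" by (simp only: e1)
    also have "\<dots> = (?Q * cnj (D \<alpha> a)) * D \<alpha> b" by (simp only: ac_simps)
    also have "\<dots> = (cnj (D \<alpha> b) * ?p) * D \<alpha> b" by (simp only: e2')
    finally show ?thesis .
  qed
  then have "(D \<alpha> a * cnj (D \<alpha> a)) * ?p = (D \<alpha> b * cnj (D \<alpha> b)) * ?p" by (simp add: ac_simps)
  then have "D \<alpha> a * cnj (D \<alpha> a) = D \<alpha> b * cnj (D \<alpha> b)" using assms(1) S_def by simp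
  then have "complex_of_real ((cmod (D \<alpha> a))^2) = complex_of_real ((cmod (D \<alpha> b))^2)"
    by (simp only: complex_norm_square)
  then have "(cmod (D \<alpha> a))^2 = (cmod (D \<alpha> b))^2" using of_real_eq_iff by blast
  then show ?thesis by (simp add: power2_eq_iff_nonneg)
qed

lemma S_fwd: assumes "S a b" "\<alpha> < N" "D \<alpha> a \<noteq> 0"
  shows "P $ (\<sigma> \<alpha> a) $ (\<sigma> \<alpha> b) = coh_weight D \<alpha> (a, b) * P $ a $ b"
    and "S (\<sigma> \<alpha> a) (\<sigma> \<alpha> b)"
proof -
  have aB: "a \<in> B" "b \<in> B" using S_B[OF assms(1)] by auto
  have db: "D \<alpha> b \<noteq> 0" using S_D[OF assms(1,2)] assms(3) by auto
  have e1: "P $ (\<sigma> \<alpha> a) $ (\<sigma> \<alpha> b) * D \<alpha> b = D \<alpha> a * P $ a $ b" using E1[OF assms(2) aB] .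
  have w: "coh_weight D \<alpha> (a, b) * D \<alpha> b = D \<alpha> a"
  proof -
    have "coh_weight D \<alpha> (a, b) * D \<alpha> b = D \<alpha> a * (cnj (D \<alpha> b) * D \<alpha> b) / complex_of_real (cmod (D \<alpha> a) * cmod (D \<alpha> b))"
      by (simp add: coh_weight_def mult_ac)
    also have "\<dots> = D \<alpha> a" using S_D[OF assms(1,2)] db
      by (simp add: cnj_mult_self power2_eq_square)
    finally show ?thesis .
  qed
  show eq: "P $ (\<sigma> \<alpha> a) $ (\<sigma> \<alpha> b) = coh_weight D \<alpha> (a, b) * P $ a $ b"
  proof -
    have "P $ (\<sigma> \<alpha> a) $ (\<sigma> \<alpha> b) * D \<alpha> b = (coh_weight D \<alpha> (a, b) * P $ a $ b) * D \<alpha> b"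
      using e1 w by (simp add: mult_ac)
    then show ?thesis using db by simp
  qed
  have "coh_weight D \<alpha> (a, b) \<noteq> 0" using w assms(3) by auto
  then show "S (\<sigma> \<alpha> a) (\<sigma> \<alpha> b)" using eq assms(1) S_def by simp
qed

lemma S_bwd_edge: assumes "\<alpha> < N" "j \<in> B" "k \<in> B" "D \<alpha> j \<noteq> 0" "D \<alpha> k \<noteq> 0"
  "S (\<sigma> \<alpha> j) (\<sigma> \<alpha> k)" shows "S j k"
  using E1[OF assms(1-3)] assms(5,6) S_def by auto

lemma S_bwd: assumes "S (\<sigma> \<alpha> j) b" "j \<in> B" "D \<alpha> j \<noteq> 0" "\<alpha> < N"
  shows "inv (\<sigma> \<alpha>) b \<in> B \<and> D \<alpha> (inv (\<sigma> \<alpha>) b) \<noteq> 0 \<and> S j (inv (\<sigma> \<alpha>) b)"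
proof -
  have "P $ b $ (\<sigma> \<alpha> j) \<noteq> 0" using S_sym[OF assms(1)] S_def by simp
  then have "P $ b $ (\<sigma> \<alpha> j) * D \<alpha> j \<noteq> 0" using assms(3) by simp
  then have "(if b \<in> B \<and> inv (\<sigma> \<alpha>) b \<in> B then D \<alpha> (inv (\<sigma> \<alpha>) b) * P $ (inv (\<sigma> \<alpha>) b) $ j else 0) \<noteq> 0"
    using E3[OF assms(4,2,3)] by simp
  then show ?thesis using S_sym S_def by (auto split: if_splits)
qed

lemma offdiag: "\<exists>j k. j \<noteq> k \<and> P $ j $ k \<noteq> 0"
proof (rule ccontr)
  assume "\<not> ?thesis"
  then have od: "\<And>j k. j \<noteq> k \<Longrightarrow> P $ j $ k = 0" by blast
  define Q where "Q = {j. P $ j $ j = 1}"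
  have dd: "P $ j $ j = 0 \<or> P $ j $ j = 1" for j
  proof -
    have "P $ j $ j = (\<Sum>k\<in>UNIV. P $ j $ k * P $ k $ j)" using PP by (metis matmul_entry)
    also have "\<dots> = (\<Sum>k\<in>UNIV. if k = j then P $ j $ j * P $ j $ j else 0)"
      by (rule sum.cong) (auto simp: od)
    finally have "P $ j $ j = P $ j $ j * P $ j $ j" by simp
    then show ?thesis by (metis mult_cancel_left1)
  qed
  have PQ: "P = diag_proj Q"
    by (simp add: vec_eq_iff diag_proj_entry Q_def) (metis od dd)
  have QB: "Q \<subseteq> B"
  proof
    fix j assume "j \<in> Q"
    then have "P $ j $ j \<noteq> 0" by (simp add: Q_def)
    then show "j \<in> B" using Poff by blast
  qed
  have Qcl: "y \<in> Q" if jQ: "j \<in> Q" and jy: "E j y" for j y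
  proof -
    obtain \<alpha> where a: "\<alpha> < N" "\<sigma> \<alpha> j = y" "D \<alpha> j \<noteq> 0" using jy edge_iff by blast
    have jB: "j \<in> B" using jQ QB by auto
    have "P $ y $ y * D \<alpha> j = D \<alpha> j * P $ j $ j" using E1[OF a(1) jB jB] a(2) by simp
    then have "P $ y $ y = P $ j $ j" using a(3) by (simp add: mult.commute)
    then show ?thesis using jQ Q_def by simp
  qed
  have Qrtr: "E\<^sup>*\<^sup>* j y \<Longrightarrow> j \<in> Q \<Longrightarrow> y \<in> Q" for j y
    by (induction rule: rtranclp_induct) (auto intro: Qcl)
  define SS where "SS = {C \<in> basins N \<sigma> D. C \<subseteq> Q}"
  have "Q = \<Union>SS"
  proof
    show "Q \<subseteq> \<Union>SS"
    proof
      fix j assume j: "j \<in> Q"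
      then obtain C0 where C0: "C0 \<in> basins N \<sigma> D" "j \<in> C0" using QB in_B by blast
      have "C0 \<subseteq> Q" using basin_reach[OF C0(1) C0(2)] Qrtr j by blast
      then show "j \<in> \<Union>SS" using C0 SS_def by blast
    qed
  qed (auto simp: SS_def)
  moreover have "(\<Sum>C\<in>SS. diag_proj C) = (diag_proj (\<Union>SS) :: 'n cmat)"
  proof (rule diag_proj_sum)
    show "finite SS" by (rule finite_subset[OF _ finite_basins]) (auto simp: SS_def)
    show "\<And>C1 C2 x. C1 \<in> SS \<Longrightarrow> C2 \<in> SS \<Longrightarrow> x \<in> C1 \<Longrightarrow> x \<in> C2 \<Longrightarrow> C1 = C2"
      using basins_disj by (auto simp: SS_def)
  qed
  ultimately have "P = (\<Sum>C\<in>SS. diag_proj C)" using PQ by simp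
  moreover have "SS \<subseteq> basins N \<sigma> D" by (auto simp: SS_def)
  ultimately show False using nS by blast
qed

end


locale fctx2 = fctx N \<sigma> D Hd P for N and \<sigma> :: "nat \<Rightarrow> 'n::finite \<Rightarrow> 'n" and D Hd P +
  fixes j0 k0 :: 'n
  assumes jk0: "j0 \<noteq> k0" and Pjk0: "P $ j0 $ k0 \<noteq> 0"
begin

definition edgeB :: "'n \<times> 'n \<Rightarrow> nat \<Rightarrow> 'n \<times> 'n \<Rightarrow> bool" where
  "edgeB x \<alpha> y \<longleftrightarrow> \<alpha> < N \<and> fst x \<in> B \<and> snd x \<in> B \<and> fst x \<noteq> snd x \<and> fst y \<noteq> snd y
     \<and> \<sigma> \<alpha> (fst x) = fst y \<and> \<sigma> \<alpha> (snd x) = snd y \<and> D \<alpha> (fst x) \<noteq> 0 \<and> D \<alpha> (snd x) \<noteq> 0"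

definition adjB :: "'n \<times> 'n \<Rightarrow> 'n \<times> 'n \<Rightarrow> bool" where
  "adjB x y \<longleftrightarrow> (\<exists>\<alpha>. edgeB x \<alpha> y \<or> edgeB y \<alpha> x)"

definition K :: "('n \<times> 'n) set" where "K = {y. adjB\<^sup>*\<^sup>* (j0, k0) y}"

definition RR :: "('n \<times> 'n) set" where "RR = (K \<union> K\<inverse>)\<^sup>+"

definition Ns :: "'n set" where "Ns = fst ` K \<union> snd ` K"

lemma K0: "(j0, k0) \<in> K" by (simp add: K_def)

lemma Kcl: "x \<in> K \<Longrightarrow> adjB x y \<Longrightarrow> y \<in> K"
  unfolding K_def by (simp add: rtranclp.rtrancl_into_rtrancl)

lemma KS: "x \<in> K \<Longrightarrow> S (fst x) (snd x) \<and> fst x \<noteq> snd x"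
proof -
  assume "x \<in> K"
  then have "adjB\<^sup>*\<^sup>* (j0, k0) x" by (simp add: K_def)
  then show ?thesis
  proof (induction rule: rtranclp_induct)
    case base then show ?case using jk0 Pjk0 by (simp add: S_def)
  next
    case (step y z)
    then obtain \<alpha> where "edgeB y \<alpha> z \<or> edgeB z \<alpha> y" unfolding adjB_def by blast
    then show ?case
    proof
      assume e: "edgeB y \<alpha> z"
      then have "S (\<sigma> \<alpha> (fst y)) (\<sigma> \<alpha> (snd y))" using S_fwd(2) step.IH unfolding edgeB_def by blast
      then show ?thesis using e unfolding edgeB_def by simp
    next
      assume e: "edgeB z \<alpha> y"
      then have "S (\<sigma> \<alpha> (fst z)) (\<sigma> \<alpha> (snd z))" using step.IH unfolding edgeB_def by simp
      then have "S (fst z) (snd z)" using S_bwd_edge e unfolding edgeB_def by blast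
      then show ?thesis using e unfolding edgeB_def by simp
    qed
  qed
qed

lemma KSp: "(a, b) \<in> K \<Longrightarrow> S a b \<and> a \<noteq> b"
  using KS by fastforce

lemma KB: "(a, b) \<in> K \<Longrightarrow> a \<in> B \<and> b \<in> B"
  using KSp S_B by blast

lemma K_fwd: assumes "(a, b) \<in> K" "\<alpha> < N" "D \<alpha> a \<noteq> 0"
  shows "(\<sigma> \<alpha> a, \<sigma> \<alpha> b) \<in> K"
proof -
  have Sab: "S a b" "a \<noteq> b" using KSp[OF assms(1)] by auto
  have "D \<alpha> b \<noteq> 0" using S_D[OF Sab(1) assms(2)] assms(3) by auto
  moreover have "\<sigma> \<alpha> a \<noteq> \<sigma> \<alpha> b" using Sab(2) s_inj[OF assms(2)] by simp
  ultimately have "edgeB (a, b) \<alpha> (\<sigma> \<alpha> a, \<sigma> \<alpha> b)"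
    using assms KB[OF assms(1)] Sab unfolding edgeB_def by simp
  then show ?thesis using Kcl[OF assms(1)] adjB_def by blast
qed

lemma K_bwd: assumes "(a, b) \<in> K" "\<alpha> < N" "inv (\<sigma> \<alpha>) a \<in> B" "D \<alpha> (inv (\<sigma> \<alpha>) a) \<noteq> 0"
  shows "inv (\<sigma> \<alpha>) b \<in> B \<and> D \<alpha> (inv (\<sigma> \<alpha>) b) \<noteq> 0 \<and> (inv (\<sigma> \<alpha>) a, inv (\<sigma> \<alpha>) b) \<in> K"
proof -
  let ?u = "inv (\<sigma> \<alpha>) a" and ?v = "inv (\<sigma> \<alpha>) b"
  have Sab: "S a b" "a \<noteq> b" using KSp[OF assms(1)] by auto
  have "S (\<sigma> \<alpha> ?u) b" using Sab s_inv[OF assms(2)] by simp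
  then have v: "?v \<in> B" "D \<alpha> ?v \<noteq> 0" "S ?u ?v" using S_bwd assms(2-4) by blast+
  have "?u \<noteq> ?v" using Sab(2) s_inv[OF assms(2)] by metis
  then have "edgeB (?u, ?v) \<alpha> (a, b)"
    using assms v Sab s_inv[OF assms(2)] unfolding edgeB_def by simp
  then have "(?u, ?v) \<in> K" using Kcl[OF assms(1)] adjB_def by blast
  then show ?thesis using v by simp
qed

lemma K_bwd2: assumes "(a, b) \<in> K" "\<alpha> < N" "inv (\<sigma> \<alpha>) b \<in> B" "D \<alpha> (inv (\<sigma> \<alpha>) b) \<noteq> 0"
  shows "inv (\<sigma> \<alpha>) a \<in> B \<and> D \<alpha> (inv (\<sigma> \<alpha>) a) \<noteq> 0 \<and> (inv (\<sigma> \<alpha>) a, inv (\<sigma> \<alpha>) b) \<in> K"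
proof -
  let ?u = "inv (\<sigma> \<alpha>) a" and ?v = "inv (\<sigma> \<alpha>) b"
  have Sab: "S a b" "a \<noteq> b" using KSp[OF assms(1)] by auto
  have "S (\<sigma> \<alpha> ?v) a" using S_sym[OF Sab(1)] s_inv[OF assms(2)] by simp
  then have u: "?u \<in> B" "D \<alpha> ?u \<noteq> 0" "S ?v ?u" using S_bwd assms(2-4) by blast+
  have "?u \<noteq> ?v" using Sab(2) s_inv[OF assms(2)] by metis
  then have "edgeB (?u, ?v) \<alpha> (a, b)"
    using assms u Sab s_inv[OF assms(2)] unfolding edgeB_def by simp
  then have "(?u, ?v) \<in> K" using Kcl[OF assms(1)] adjB_def by blast
  then show ?thesis using u by simp
qed

lemma KK_S: "(a, b) \<in> K \<union> K\<inverse> \<Longrightarrow> S a b"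
  using KSp S_sym by blast

lemma RR_inv:
  assumes QS: "\<And>a b. S a b \<Longrightarrow> Q a b" and Qt: "\<And>a b c. Q a b \<Longrightarrow> Q b c \<Longrightarrow> Q a c"
  shows "(a, b) \<in> RR \<Longrightarrow> Q a b"
  unfolding RR_def
proof (induction rule: trancl_induct)
  case (base y) then show ?case using KK_S QS by blast
next
  case (step y z) then show ?case using KK_S QS Qt by blast
qed

lemma RR_H: "(a, b) \<in> RR \<Longrightarrow> Hd a = Hd b"
  by (rule RR_inv[where Q = "\<lambda>a b. Hd a = Hd b"]) (auto simp: S_H)

lemma RR_D: "(a, b) \<in> RR \<Longrightarrow> \<alpha> < N \<Longrightarrow> cmod (D \<alpha> a) = cmod (D \<alpha> b)"
  by (rule RR_inv[where Q = "\<lambda>a b. cmod (D \<alpha> a) = cmod (D \<alpha> b)"]) (auto simp: S_D)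

lemma RR_B: "(a, b) \<in> RR \<Longrightarrow> a \<in> B \<and> b \<in> B"
  by (rule RR_inv[where Q = "\<lambda>a b. a \<in> B \<and> b \<in> B"]) (auto dest: S_B)

lemma K_RR: "x \<in> K \<Longrightarrow> x \<in> RR"
  unfolding RR_def by (rule r_into_trancl') simp

lemma Kc_RR: "(a, b) \<in> K \<Longrightarrow> (b, a) \<in> RR"
  unfolding RR_def by (rule r_into_trancl) simp

lemma RR_trans: "(a, b) \<in> RR \<Longrightarrow> (b, c) \<in> RR \<Longrightarrow> (a, c) \<in> RR"
  unfolding RR_def by (rule trancl_trans)

lemma RR_sym: "(a, b) \<in> RR \<Longrightarrow> (b, a) \<in> RR"
proof -
  have "sym (K \<union> K\<inverse>)" by (auto simp: sym_def)
  then have "sym RR" unfolding RR_def by (rule sym_trancl)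
  then show "(a, b) \<in> RR \<Longrightarrow> (b, a) \<in> RR" by (auto simp: sym_def)
qed

lemma RR_Ns: "(a, b) \<in> RR \<Longrightarrow> a \<in> Ns \<and> b \<in> Ns"
  unfolding RR_def
proof (induction rule: trancl_induct)
  case (base y) then show ?case by (force simp: Ns_def)
next
  case (step y z) then show ?case by (force simp: Ns_def)
qed

lemma Ns_refl: "a \<in> Ns \<Longrightarrow> (a, a) \<in> RR"
proof -
  assume "a \<in> Ns"
  then obtain b where "(a, b) \<in> K \<or> (b, a) \<in> K" unfolding Ns_def by force
  then have "(a, b) \<in> RR \<and> (b, a) \<in> RR" using K_RR Kc_RR by blast
  then show ?thesis using RR_trans by blast
qed

lemma equiv_RR: "equiv Ns RR"
proof -
  have "RR \<subseteq> Ns \<times> Ns" using RR_Ns by auto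
  moreover have "\<forall>x\<in>Ns. (x, x) \<in> RR" using Ns_refl by blast
  moreover have "sym RR" using RR_sym by (auto simp: sym_def)
  moreover have "trans RR" using RR_trans by (auto simp: trans_def)
  ultimately show ?thesis unfolding equiv_def refl_on_def by blast
qed

end


context fctx2
begin

lemma Ns_B: "a \<in> Ns \<Longrightarrow> a \<in> B"
  unfolding Ns_def using KB by force

lemma KK_RR: "p \<in> K \<union> K\<inverse> \<Longrightarrow> p \<in> RR"
  unfolding RR_def by (rule r_into_trancl')

lemma KK_fwd: assumes "(y, z) \<in> K \<union> K\<inverse>" "\<alpha> < N" "D \<alpha> y \<noteq> 0"
  shows "(\<sigma> \<alpha> y, \<sigma> \<alpha> z) \<in> K \<union> K\<inverse>"
proof (cases "(y, z) \<in> K")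
  case True then show ?thesis using K_fwd assms by blast
next
  case False
  then have zy: "(z, y) \<in> K" using assms(1) by auto
  have "D \<alpha> z \<noteq> 0" using S_D[OF KSp[OF zy, THEN conjunct1] assms(2)] assms(3) by auto
  then have "(\<sigma> \<alpha> z, \<sigma> \<alpha> y) \<in> K" using K_fwd[OF zy assms(2)] by blast
  then show ?thesis by auto
qed

lemma RR_act: assumes "(j, k) \<in> RR" "\<alpha> < N" "D \<alpha> j \<noteq> 0"
  shows "(\<sigma> \<alpha> j, \<sigma> \<alpha> k) \<in> RR"
  using assms(1) unfolding RR_def
proof (induction rule: trancl_induct)
  case (base y)
  then show ?case using KK_fwd[OF _ assms(2,3)] by (blast intro: r_into_trancl)
next
  case (step y z)
  have "(j, y) \<in> RR" using step(1) RR_def by simp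
  then have "D \<alpha> y \<noteq> 0" using RR_D[OF _ assms(2)] assms(3) by fastforce
  then have "(\<sigma> \<alpha> y, \<sigma> \<alpha> z) \<in> K \<union> K\<inverse>" using KK_fwd[OF step(2) assms(2)] by blast
  then show ?case using step(3) by (meson trancl_into_trancl)
qed

lemma pre_step: assumes "u \<in> B" "D \<alpha> u \<noteq> 0" "\<alpha> < N" "(\<sigma> \<alpha> u, z) \<in> K \<union> K\<inverse>"
  shows "\<exists>v. (u, v) \<in> K \<union> K\<inverse> \<and> \<sigma> \<alpha> v = z"
proof (cases "(\<sigma> \<alpha> u, z) \<in> K")
  case True
  have "inv (\<sigma> \<alpha>) (\<sigma> \<alpha> u) = u" using inv_s[OF assms(3)] .
  then have "(u, inv (\<sigma> \<alpha>) z) \<in> K" using K_bwd[OF True assms(3)] assms(1,2) by simp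
  then show ?thesis using s_inv[OF assms(3)] by blast
next
  case False
  then have zu: "(z, \<sigma> \<alpha> u) \<in> K" using assms(4) by auto
  have "inv (\<sigma> \<alpha>) (\<sigma> \<alpha> u) = u" using inv_s[OF assms(3)] .
  then have "(inv (\<sigma> \<alpha>) z, u) \<in> K" using K_bwd2[OF zu assms(3)] assms(1,2) by simp
  then show ?thesis using s_inv[OF assms(3)] by blast
qed

lemma class_img: assumes "j \<in> Ns" "\<alpha> < N" "D \<alpha> j \<noteq> 0"
  shows "\<sigma> \<alpha> ` (RR `` {j}) = RR `` {\<sigma> \<alpha> j}"
proof
  show "\<sigma> \<alpha> ` (RR `` {j}) \<subseteq> RR `` {\<sigma> \<alpha> j}" using RR_act assms(2,3) by auto
next
  have jB: "j \<in> B" using Ns_B[OF assms(1)] .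
  have "\<exists>u. (j, u) \<in> RR \<and> \<sigma> \<alpha> u = y" if "(\<sigma> \<alpha> j, y) \<in> RR" for y
    using that unfolding RR_def
  proof (induction rule: trancl_induct)
    case (base y)
    then show ?case using pre_step[OF jB assms(3,2)] by (blast intro: r_into_trancl)
  next
    case (step y z)
    then obtain u where u: "(j, u) \<in> (K \<union> K\<inverse>)\<^sup>+" "\<sigma> \<alpha> u = y" by blast
    have uR: "(j, u) \<in> RR" using u(1) RR_def by simp
    have uB: "u \<in> B" using RR_B[OF uR] by simp
    have du: "D \<alpha> u \<noteq> 0" using RR_D[OF uR assms(2)] assms(3) by auto
    obtain v where v: "(u, v) \<in> K \<union> K\<inverse>" "\<sigma> \<alpha> v = z" using pre_step[OF uB du assms(2)] step(2) u(2) by blast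
    have "(j, v) \<in> (K \<union> K\<inverse>)\<^sup>+" using u(1) v(1) by (rule trancl_into_trancl)
    then show ?case using v(2) by blast
  qed
  then show "RR `` {\<sigma> \<alpha> j} \<subseteq> \<sigma> \<alpha> ` (RR `` {j})" by blast
qed

lemma class_card_eq: assumes "j \<in> Ns" "\<alpha> < N" "D \<alpha> j \<noteq> 0"
  shows "card (RR `` {\<sigma> \<alpha> j}) = card (RR `` {j})"
proof -
  have "inj_on (\<sigma> \<alpha>) (RR `` {j})" using s_inj[OF assms(2)] by (simp add: inj_on_def)
  then show ?thesis using class_img[OF assms] card_image by metis
qed

lemma K_Ns: "(a, b) \<in> K \<Longrightarrow> a \<in> Ns \<and> b \<in> Ns"
  unfolding Ns_def by force

lemma all_card: "x \<in> K \<Longrightarrow> card (RR `` {fst x}) = card (RR `` {j0})"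
proof -
  assume "x \<in> K"
  then have "adjB\<^sup>*\<^sup>* (j0, k0) x" by (simp add: K_def)
  then show ?thesis
  proof (induction rule: rtranclp_induct)
    case base then show ?case by simp
  next
    case (step y z)
    have yK: "y \<in> K" using step(1) K_def by simp
    have zK: "z \<in> K" using Kcl[OF yK step(2)] .
    obtain \<alpha> where "edgeB y \<alpha> z \<or> edgeB z \<alpha> y" using step(2) unfolding adjB_def by blast
    then show ?case
    proof
      assume e: "edgeB y \<alpha> z"
      have "fst y \<in> Ns" using yK K_Ns by (cases y) auto
      then have "card (RR `` {\<sigma> \<alpha> (fst y)}) = card (RR `` {fst y})"
        using class_card_eq e unfolding edgeB_def by blast
      then show ?thesis using step(3) e unfolding edgeB_def by simp
    next
      assume e: "edgeB z \<alpha> y"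
      have "fst z \<in> Ns" using zK K_Ns by (cases z) auto
      then have "card (RR `` {\<sigma> \<alpha> (fst z)}) = card (RR `` {fst z})"
        using class_card_eq e unfolding edgeB_def by blast
      then show ?thesis using step(3) e unfolding edgeB_def by simp
    qed
  qed
qed

definition \<nu>0 :: nat where "\<nu>0 = card (RR `` {j0})"

lemma Ns_card: "a \<in> Ns \<Longrightarrow> card (RR `` {a}) = \<nu>0"
proof -
  assume "a \<in> Ns"
  then obtain x where x: "x \<in> K" "a = fst x \<or> a = snd x" unfolding Ns_def by blast
  have "(fst x, snd x) \<in> RR" using K_RR[OF x(1)] by simp
  then have "RR `` {fst x} = RR `` {snd x}" by (rule equiv_class_eq[OF equiv_RR])
  then show ?thesis using x all_card[OF x(1)] \<nu>0_def by auto
qed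

lemma uniform: "uniform_equiv Ns RR \<nu>0"
  unfolding uniform_equiv_def using equiv_RR Ns_card by (auto elim: quotientE)

lemma nu_ge2: "\<nu>0 \<ge> 2"
proof -
  have j0N: "j0 \<in> Ns" using K_Ns[OF K0] by simp
  have "{j0, k0} \<subseteq> RR `` {j0}" using Ns_refl[OF j0N] K_RR[OF K0] by auto
  moreover have "finite (RR `` {j0})" by simp
  ultimately have "card {j0, k0} \<le> card (RR `` {j0})" by (rule card_mono[rotated])
  then show ?thesis using jk0 \<nu>0_def by simp
qed

end


lemma funpow_inv_cancel:
  assumes "\<And>y. g (f y) = y"
  shows "i \<le> n \<Longrightarrow> (g ^^ i) ((f ^^ n) x) = (f ^^ (n - i)) x"
proof (induction i)
  case 0 then show ?case by simp
next
  case (Suc i)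
  have "(g ^^ Suc i) ((f ^^ n) x) = g ((g ^^ i) ((f ^^ n) x))" by simp
  also have "\<dots> = g ((f ^^ (n - i)) x)" using Suc by simp
  also have "n - i = Suc (n - Suc i)" using Suc.prems by simp
  finally show ?case by (simp add: assms)
qed

lemma perm_cycle:
  fixes s :: "'n::finite \<Rightarrow> 'n"
  assumes "inj s"
  shows "\<exists>m>0. (s ^^ m) x = x"
proof -
  let ?f = "\<lambda>i. (s ^^ i) x"
  have "\<not> inj_on ?f {..card (UNIV :: 'n set)}"
  proof
    assume "inj_on ?f {..card (UNIV :: 'n set)}"
    then have "card (?f ` {..card (UNIV :: 'n set)}) = Suc (card (UNIV :: 'n set))"
      by (simp add: card_image)
    moreover have "card (?f ` {..card (UNIV :: 'n set)}) \<le> card (UNIV :: 'n set)"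
      by (rule card_mono) auto
    ultimately show False by simp
  qed
  then obtain i0 k0 where ik0: "i0 \<noteq> k0" "?f i0 = ?f k0"
    unfolding inj_on_def by blast
  have "\<exists>i k. i < k \<and> ?f i = ?f k"
  proof (cases "i0 < k0")
    case True then show ?thesis using ik0 by blast
  next
    case False
    then have "k0 < i0" using ik0(1) by simp
    then show ?thesis using ik0(2) by (intro exI[of _ k0] exI[of _ i0]) simp
  qed
  then obtain i k where ik: "i < k" "(s ^^ i) x = (s ^^ k) x" by blast
  have kk: "k = i + (k - i)" using ik(1) by simp
  have "(s ^^ k) x = (s ^^ (i + (k - i))) x" using kk by simp
  also have "\<dots> = (s ^^ i) ((s ^^ (k - i)) x)" by (simp only: funpow_add o_apply)
  finally have "(s ^^ i) ((s ^^ (k - i)) x) = (s ^^ i) x" using ik(2) by simp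
  moreover have "inj (s ^^ i)" using assms by (rule inj_fn)
  ultimately have "(s ^^ (k - i)) x = x" by (meson injD)
  then show ?thesis using ik(1) by (intro exI[of _ "k - i"]) simp
qed

context fctx2
begin

definition hasp :: "nat \<Rightarrow> 'n \<Rightarrow> bool" where
  "hasp \<alpha> x \<longleftrightarrow> inv (\<sigma> \<alpha>) x \<in> B \<and> D \<alpha> (inv (\<sigma> \<alpha>) x) \<noteq> 0"

definition W :: "nat \<Rightarrow> 'n \<Rightarrow> nat \<Rightarrow> bool" where
  "W \<alpha> x t \<longleftrightarrow> (\<forall>i<t. hasp \<alpha> ((inv (\<sigma> \<alpha>) ^^ i) x)) \<and> \<not> hasp \<alpha> ((inv (\<sigma> \<alpha>) ^^ t) x)"

lemma KW: assumes "(a, b) \<in> K" "\<alpha> < N"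
  shows "(\<forall>i<t. hasp \<alpha> ((inv (\<sigma> \<alpha>) ^^ i) a)) \<Longrightarrow>
     (\<forall>i<t. hasp \<alpha> ((inv (\<sigma> \<alpha>) ^^ i) b)) \<and> ((inv (\<sigma> \<alpha>) ^^ t) a, (inv (\<sigma> \<alpha>) ^^ t) b) \<in> K"
proof (induction t)
  case 0 then show ?case using assms(1) by simp
next
  case (Suc t)
  then have IH: "\<forall>i<t. hasp \<alpha> ((inv (\<sigma> \<alpha>) ^^ i) b)" "((inv (\<sigma> \<alpha>) ^^ t) a, (inv (\<sigma> \<alpha>) ^^ t) b) \<in> K"
    by auto
  have "hasp \<alpha> ((inv (\<sigma> \<alpha>) ^^ t) a)" using Suc.prems by simp
  then have h: "hasp \<alpha> ((inv (\<sigma> \<alpha>) ^^ t) b)"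
    "(inv (\<sigma> \<alpha>) ((inv (\<sigma> \<alpha>) ^^ t) a), inv (\<sigma> \<alpha>) ((inv (\<sigma> \<alpha>) ^^ t) b)) \<in> K"
    using K_bwd[OF IH(2) assms(2)] unfolding hasp_def by auto
  have "\<forall>i<Suc t. hasp \<alpha> ((inv (\<sigma> \<alpha>) ^^ i) b)" using IH(1) h(1) less_Suc_eq by auto
  then show ?case using h(2) by simp
qed

lemma KW2: assumes "(a, b) \<in> K" "\<alpha> < N"
  shows "(\<forall>i<t. hasp \<alpha> ((inv (\<sigma> \<alpha>) ^^ i) b)) \<Longrightarrow>
     (\<forall>i<t. hasp \<alpha> ((inv (\<sigma> \<alpha>) ^^ i) a)) \<and> ((inv (\<sigma> \<alpha>) ^^ t) a, (inv (\<sigma> \<alpha>) ^^ t) b) \<in> K"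
proof (induction t)
  case 0 then show ?case using assms(1) by simp
next
  case (Suc t)
  then have IH: "\<forall>i<t. hasp \<alpha> ((inv (\<sigma> \<alpha>) ^^ i) a)" "((inv (\<sigma> \<alpha>) ^^ t) a, (inv (\<sigma> \<alpha>) ^^ t) b) \<in> K"
    by auto
  have "hasp \<alpha> ((inv (\<sigma> \<alpha>) ^^ t) b)" using Suc.prems by simp
  then have h: "hasp \<alpha> ((inv (\<sigma> \<alpha>) ^^ t) a)"
    "(inv (\<sigma> \<alpha>) ((inv (\<sigma> \<alpha>) ^^ t) a), inv (\<sigma> \<alpha>) ((inv (\<sigma> \<alpha>) ^^ t) b)) \<in> K"
    using K_bwd2[OF IH(2) assms(2)] unfolding hasp_def by auto
  have "\<forall>i<Suc t. hasp \<alpha> ((inv (\<sigma> \<alpha>) ^^ i) a)" using IH(1) h(1) less_Suc_eq by auto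
  then show ?case using h(2) by simp
qed

lemma KW_iff: assumes "(a, b) \<in> K" "\<alpha> < N"
  shows "W \<alpha> a t \<longleftrightarrow> W \<alpha> b t" and "W \<alpha> a t \<Longrightarrow> ((inv (\<sigma> \<alpha>) ^^ t) a, (inv (\<sigma> \<alpha>) ^^ t) b) \<in> K"
proof -
  show "W \<alpha> a t \<Longrightarrow> ((inv (\<sigma> \<alpha>) ^^ t) a, (inv (\<sigma> \<alpha>) ^^ t) b) \<in> K"
    using KW[OF assms] unfolding W_def by blast
  show "W \<alpha> a t \<longleftrightarrow> W \<alpha> b t"
  proof
    assume w: "W \<alpha> a t"
    then have p: "\<forall>i<t. hasp \<alpha> ((inv (\<sigma> \<alpha>) ^^ i) b)" "((inv (\<sigma> \<alpha>) ^^ t) a, (inv (\<sigma> \<alpha>) ^^ t) b) \<in> K"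
      using KW[OF assms] unfolding W_def by blast+
    have "\<not> hasp \<alpha> ((inv (\<sigma> \<alpha>) ^^ t) b)"
      using K_bwd2[OF p(2) assms(2)] w unfolding W_def hasp_def by blast
    then show "W \<alpha> b t" using p(1) W_def by blast
  next
    assume w: "W \<alpha> b t"
    then have p: "\<forall>i<t. hasp \<alpha> ((inv (\<sigma> \<alpha>) ^^ i) a)" "((inv (\<sigma> \<alpha>) ^^ t) a, (inv (\<sigma> \<alpha>) ^^ t) b) \<in> K"
      using KW2[OF assms] unfolding W_def by blast+
    have "\<not> hasp \<alpha> ((inv (\<sigma> \<alpha>) ^^ t) a)"
      using K_bwd[OF p(2) assms(2)] w unfolding W_def hasp_def by blast
    then show "W \<alpha> a t" using p(1) W_def by blast
  qed
qed

lemma KK_W: assumes "(y, z) \<in> K \<union> K\<inverse>" "\<alpha> < N" "W \<alpha> y t"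
  shows "W \<alpha> z t \<and> ((inv (\<sigma> \<alpha>) ^^ t) y, (inv (\<sigma> \<alpha>) ^^ t) z) \<in> RR"
proof (cases "(y, z) \<in> K")
  case True then show ?thesis using KW_iff[OF True assms(2)] assms(3) K_RR by blast
next
  case False
  then have zy: "(z, y) \<in> K" using assms(1) by auto
  have wz: "W \<alpha> z t" using KW_iff(1)[OF zy assms(2)] assms(3) by blast
  then have "((inv (\<sigma> \<alpha>) ^^ t) z, (inv (\<sigma> \<alpha>) ^^ t) y) \<in> K" using KW_iff(2)[OF zy assms(2)] by blast
  then show ?thesis using wz Kc_RR by blast
qed

lemma RW: assumes "(j, k) \<in> RR" "\<alpha> < N" "W \<alpha> j t"
  shows "W \<alpha> k t \<and> ((inv (\<sigma> \<alpha>) ^^ t) j, (inv (\<sigma> \<alpha>) ^^ t) k) \<in> RR"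
  using assms(1) unfolding RR_def
proof (induction rule: trancl_induct)
  case (base y) then show ?case using KK_W assms(2,3) RR_def by blast
next
  case (step y z)
  have "W \<alpha> z t \<and> ((inv (\<sigma> \<alpha>) ^^ t) y, (inv (\<sigma> \<alpha>) ^^ t) z) \<in> RR"
    using KK_W[OF step(2) assms(2)] step(3) by blast
  then show ?case using step(3) RR_trans RR_def by blast
qed

lemma W_unique: assumes "W \<alpha> x t" "W \<alpha> x t'" shows "t = t'"
proof (rule ccontr)
  assume "t \<noteq> t'"
  then have "t < t' \<or> t' < t" by arith
  then show False
  proof
    assume "t < t'" then show False using assms unfolding W_def by blast
  next
    assume "t' < t" then show False using assms unfolding W_def by blast
  qed
qed

lemma cycle_W: assumes a: "\<alpha> < N" and dj: "D \<alpha> j = 0" and sj: "\<sigma> \<alpha> j \<in> B"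
  shows "\<exists>t. W \<alpha> j t \<and> (inv (\<sigma> \<alpha>) ^^ t) j = \<sigma> \<alpha> j"
proof -
  let ?s = "\<sigma> \<alpha>" and ?p = "inv (\<sigma> \<alpha>)"
  have injs: "inj ?s" using perm_a[OF a] by (rule permutes_inj)
  define m where "m = (LEAST m. 0 < m \<and> (?s ^^ m) j = j)"
  have ex: "\<exists>m. 0 < m \<and> (?s ^^ m) j = j" using perm_cycle[OF injs] by blast
  have m: "0 < m" "(?s ^^ m) j = j" using LeastI_ex[OF ex] m_def by auto
  have mmin: "(?s ^^ l) j \<noteq> j" if "0 < l" "l < m" for l
    using not_less_Least[of l "\<lambda>m. 0 < m \<and> (?s ^^ m) j = j"] that m_def by auto
  have c: "\<And>j k. D \<alpha> j = 0 \<and> D \<alpha> k = 0 \<and> (\<exists>m. (?s ^^ m) j = k) \<longrightarrow> j = k"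
    using cyc a by blast
  have act: "D \<alpha> ((?s ^^ l) j) \<noteq> 0" if "0 < l" "l < m" for l
  proof
    assume "D \<alpha> ((?s ^^ l) j) = 0"
    moreover have "\<exists>mm. (?s ^^ mm) j = (?s ^^ l) j" by blast
    ultimately have "j = (?s ^^ l) j" using c[of j "(?s ^^ l) j"] dj by blast
    then show False using mmin[OF that] by simp
  qed
  have inB: "0 < l \<longrightarrow> l < m \<longrightarrow> (?s ^^ l) j \<in> B" for l
  proof (induction l)
    case 0 then show ?case by simp
  next
    case (Suc l)
    show ?case
    proof (cases "l = 0")
      case True then show ?thesis using sj by simp
    next
      case False
      show ?thesis
      proof (intro impI)
        assume "Suc l < m"
        then have lm: "0 < l" "l < m" using False by auto
        then have "(?s ^^ l) j \<in> B" using Suc.IH by simp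
        moreover have "D \<alpha> ((?s ^^ l) j) \<noteq> 0" using act[OF lm] .
        ultimately have "?s ((?s ^^ l) j) \<in> B" using B_closed[OF _ a] by blast
        then show "(?s ^^ Suc l) j \<in> B" by simp
      qed
    qed
  qed
  have pj: "(?p ^^ i) j = (?s ^^ (m - i)) j" if "i \<le> m" for i
    using funpow_inv_cancel[of ?p ?s, OF inv_s[OF a] that, of j] m(2) by simp
  have "W \<alpha> j (m - 1)"
    unfolding W_def
  proof (intro conjI allI impI)
    fix i assume i: "i < m - 1"
    have "?p ((?p ^^ i) j) = (?p ^^ Suc i) j" by simp
    also have "\<dots> = (?s ^^ (m - Suc i)) j" using pj[of "Suc i"] i by simp
    finally have e: "?p ((?p ^^ i) j) = (?s ^^ (m - Suc i)) j" .
    have lm: "0 < m - Suc i" "m - Suc i < m" using i by auto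
    have "(?s ^^ (m - Suc i)) j \<in> B" using inB[of "m - Suc i"] lm by simp
    moreover have "D \<alpha> ((?s ^^ (m - Suc i)) j) \<noteq> 0" using act[OF lm] .
    ultimately show "hasp \<alpha> ((?p ^^ i) j)" unfolding hasp_def e by simp
  next
    have "?p ((?p ^^ (m - 1)) j) = (?p ^^ m) j" using m(1) by (metis Suc_diff_1 funpow.simps(2) o_apply)
    also have "\<dots> = j" using pj[of m] by simp
    finally show "\<not> hasp \<alpha> ((?p ^^ (m - 1)) j)" unfolding hasp_def using dj by simp
  qed
  moreover have "(?p ^^ (m - 1)) j = ?s j" using pj[of "m - 1"] m(1) by simp
  ultimately show ?thesis by blast
qed

lemma RR_inact: assumes "(j, k) \<in> RR" "\<alpha> < N" "D \<alpha> j = 0" "\<sigma> \<alpha> j \<in> B" "\<sigma> \<alpha> k \<in> B"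
  shows "(\<sigma> \<alpha> j, \<sigma> \<alpha> k) \<in> RR"
proof -
  have dk: "D \<alpha> k = 0" using RR_D[OF assms(1,2)] assms(3) by simp
  obtain t where t: "W \<alpha> j t" "(inv (\<sigma> \<alpha>) ^^ t) j = \<sigma> \<alpha> j" using cycle_W[OF assms(2,3,4)] by blast
  obtain t' where t': "W \<alpha> k t'" "(inv (\<sigma> \<alpha>) ^^ t') k = \<sigma> \<alpha> k" using cycle_W[OF assms(2) dk assms(5)] by blast
  have r: "W \<alpha> k t" "((inv (\<sigma> \<alpha>) ^^ t) j, (inv (\<sigma> \<alpha>) ^^ t) k) \<in> RR" using RW[OF assms(1,2) t(1)] by auto
  have "t = t'" using W_unique[OF r(1) t'(1)] .
  then show ?thesis using r(2) t(2) t'(2) by simp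
qed

lemma RR_sigma: assumes "(j, k) \<in> RR" "\<alpha> < N" "\<sigma> \<alpha> j \<in> B" "\<sigma> \<alpha> k \<in> B"
  shows "(\<sigma> \<alpha> j, \<sigma> \<alpha> k) \<in> RR"
  using RR_act[OF assms(1,2)] RR_inact[OF assms(1,2) _ assms(3,4)] by blast

end


context fctx2
begin

lemma K_vert: "x \<in> K \<Longrightarrow> x \<in> coh_vertices RR"
proof -
  assume xK: "x \<in> K"
  have "x \<in> RR" using K_RR[OF xK] .
  moreover have "fst x \<noteq> snd x" using KS[OF xK] by simp
  ultimately show ?thesis by (cases x) (simp add: coh_vertices_def)
qed

lemma coh_adj_adjB: "coh_adj N \<sigma> D RR x y \<Longrightarrow> adjB x y"
proof -
  have "edgeB x \<alpha> y" if "coh_edge N \<sigma> D RR x \<alpha> y" for x \<alpha> y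
  proof -
    have "(fst x, snd x) \<in> RR" "fst x \<noteq> snd x" "fst y \<noteq> snd y"
      using that by (auto simp: coh_edge_def coh_vertices_def)
    then show ?thesis using that RR_B unfolding coh_edge_def edgeB_def by blast
  qed
  then show "coh_adj N \<sigma> D RR x y \<Longrightarrow> adjB x y" unfolding coh_adj_def adjB_def by blast
qed

lemma adjB_coh_adj: "x \<in> K \<Longrightarrow> adjB x y \<Longrightarrow> coh_adj N \<sigma> D RR x y"
proof -
  assume xK: "x \<in> K" and a: "adjB x y"
  have yK: "y \<in> K" using Kcl[OF xK a] .
  have "coh_edge N \<sigma> D RR u \<alpha> v" if "edgeB u \<alpha> v" "u \<in> K" "v \<in> K" for u \<alpha> v
    using that K_vert unfolding edgeB_def coh_edge_def by blast
  then show ?thesis using a xK yK unfolding adjB_def coh_adj_def by blast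
qed

lemma comp: "coh_component N \<sigma> D RR K"
  unfolding coh_component_def
proof (intro bexI[of _ "(j0, k0)"])
  show "(j0, k0) \<in> coh_vertices RR" using K_vert[OF K0] .
  show "K = {y. (coh_adj N \<sigma> D RR)\<^sup>*\<^sup>* (j0, k0) y}"
  proof
    show "K \<subseteq> {y. (coh_adj N \<sigma> D RR)\<^sup>*\<^sup>* (j0, k0) y}"
    proof
      fix y assume "y \<in> K"
      then have "adjB\<^sup>*\<^sup>* (j0, k0) y" by (simp add: K_def)
      then have "(coh_adj N \<sigma> D RR)\<^sup>*\<^sup>* (j0, k0) y"
      proof (induction rule: rtranclp_induct)
        case base then show ?case by simp
      next
        case (step y z)
        have "y \<in> K" using step(1) by (simp add: K_def)
        then have "coh_adj N \<sigma> D RR y z" using adjB_coh_adj step(2) by blast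
        then show ?case using step(3) by (rule rtranclp.rtrancl_into_rtrancl[rotated])
      qed
      then show "y \<in> {y. (coh_adj N \<sigma> D RR)\<^sup>*\<^sup>* (j0, k0) y}" by simp
    qed
  next
    show "{y. (coh_adj N \<sigma> D RR)\<^sup>*\<^sup>* (j0, k0) y} \<subseteq> K"
    proof
      fix y assume "y \<in> {y. (coh_adj N \<sigma> D RR)\<^sup>*\<^sup>* (j0, k0) y}"
      then have "(coh_adj N \<sigma> D RR)\<^sup>*\<^sup>* (j0, k0) y" by simp
      then have "adjB\<^sup>*\<^sup>* (j0, k0) y"
        by (rule rtranclp_mono[THEN predicate2D, rotated]) (auto intro: coh_adj_adjB)
      then show "y \<in> K" by (simp add: K_def)
    qed
  qed
qed

definition pv :: "'n \<times> 'n \<Rightarrow> complex" where "pv x = P $ fst x $ snd x"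

lemma pv_nz: "x \<in> K \<Longrightarrow> pv x \<noteq> 0"
  using KS by (auto simp: pv_def S_def)

lemma pv_edge: "x \<in> K \<Longrightarrow> edgeB x \<alpha> y \<Longrightarrow> pv y = coh_weight D \<alpha> x * pv x"
proof -
  assume xK: "x \<in> K" and e: "edgeB x \<alpha> y"
  have "S (fst x) (snd x)" using KS[OF xK] by simp
  then have "P $ (\<sigma> \<alpha> (fst x)) $ (\<sigma> \<alpha> (snd x)) = coh_weight D \<alpha> (fst x, snd x) * P $ fst x $ snd x"
    using S_fwd(1) e unfolding edgeB_def by blast
  then show ?thesis using e unfolding edgeB_def pv_def by simp
qed

lemma cw_norm1: "edgeB x \<alpha> y \<Longrightarrow> cmod (coh_weight D \<alpha> x) = 1"
  using cw_norm[of D \<alpha> "fst x" "snd x"] unfolding edgeB_def by simp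

lemma pv_norm: "x \<in> K \<Longrightarrow> cmod (pv x) = cmod (pv (j0, k0))"
proof -
  assume "x \<in> K"
  then have "adjB\<^sup>*\<^sup>* (j0, k0) x" by (simp add: K_def)
  then show ?thesis
  proof (induction rule: rtranclp_induct)
    case base then show ?case by simp
  next
    case (step y z)
    have yK: "y \<in> K" using step(1) by (simp add: K_def)
    have zK: "z \<in> K" using Kcl[OF yK step(2)] .
    obtain \<alpha> where "edgeB y \<alpha> z \<or> edgeB z \<alpha> y" using step(2) unfolding adjB_def by blast
    then have "cmod (pv z) = cmod (pv y)"
    proof
      assume e: "edgeB y \<alpha> z"
      show ?thesis using pv_edge[OF yK e] cw_norm1[OF e] by (simp add: norm_mult)
    next
      assume e: "edgeB z \<alpha> y"
      show ?thesis using pv_edge[OF zK e] cw_norm1[OF e] by (simp add: norm_mult)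
    qed
    then show ?case using step(3) by simp
  qed
qed

lemma res: "resonant N \<sigma> D RR K"
  unfolding resonant_def
proof (intro exI[of _ "\<lambda>x y. pv y / pv x"] conjI ballI allI impI)
  fix x y assume "x \<in> K" "y \<in> K"
  then show "cmod (pv y / pv x) = 1" using pv_norm pv_nz[OF K0] pv_nz by (simp add: norm_divide)
next
  fix x y z assume "x \<in> K" "y \<in> K" "z \<in> K"
  then show "pv y / pv x * (pv z / pv y) = pv z / pv x" using pv_nz by simp
next
  fix x y \<alpha> assume xK: "x \<in> K" and "y \<in> K" and ce: "coh_edge N \<sigma> D RR x \<alpha> y"
  have "coh_adj N \<sigma> D RR x y" using ce coh_adj_def by blast
  have "edgeB x \<alpha> y"
  proof -
    have "(fst x, snd x) \<in> RR" "fst x \<noteq> snd x" "fst y \<noteq> snd y"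
      using ce by (auto simp: coh_edge_def coh_vertices_def)
    then show ?thesis using ce RR_B unfolding coh_edge_def edgeB_def by blast
  qed
  then show "pv y / pv x = coh_weight D \<alpha> x" using pv_edge[OF xK] pv_nz[OF xK] by simp
qed

lemma fwd_main:
  "\<exists>Ns R \<nu>. Ns \<subseteq> B \<and> uniform_equiv Ns R \<nu> \<and> \<nu> \<ge> 2
       \<and> (\<forall>(j, k)\<in>R. Hd j = Hd k)
       \<and> (\<forall>\<alpha><N. \<forall>(j, k)\<in>R. cmod (D \<alpha> j) = cmod (D \<alpha> k)
            \<and> (\<sigma> \<alpha> j \<in> B \<and> \<sigma> \<alpha> k \<in> B
                 \<longrightarrow> (\<sigma> \<alpha> j, \<sigma> \<alpha> k) \<in> R))
       \<and> (\<exists>C. coh_component N \<sigma> D R C \<and> resonant N \<sigma> D R C)"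
proof (intro exI conjI)
  show "Ns \<subseteq> B" using Ns_B by blast
  show "uniform_equiv Ns RR \<nu>0" by (rule uniform)
  show "\<nu>0 \<ge> 2" by (rule nu_ge2)
  show "\<forall>(j, k)\<in>RR. Hd j = Hd k" using RR_H by blast
  show "\<forall>\<alpha><N. \<forall>(j, k)\<in>RR. cmod (D \<alpha> j) = cmod (D \<alpha> k)
            \<and> (\<sigma> \<alpha> j \<in> B \<and> \<sigma> \<alpha> k \<in> B \<longrightarrow> (\<sigma> \<alpha> j, \<sigma> \<alpha> k) \<in> RR)"
    using RR_D RR_sigma by blast
  show "coh_component N \<sigma> D RR K" by (rule comp)
  show "resonant N \<sigma> D RR K" by (rule res)
qed

end


theorem mainTheorem7:
  fixes Hd :: "'n::finite \<Rightarrow> real"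
    and N :: nat
    and \<sigma> :: "nat \<Rightarrow> 'n \<Rightarrow> 'n"
    and D :: "nat \<Rightarrow> 'n \<Rightarrow> complex"
  assumes perm: "\<forall>\<alpha><N. \<sigma> \<alpha> permutes UNIV"
    and cyc: "\<forall>\<alpha><N. \<forall>j k. D \<alpha> j = 0 \<and> D \<alpha> k = 0 \<and> (\<exists>m. (\<sigma> \<alpha> ^^ m) j = k) \<longrightarrow> j = k"
  shows "has_hidden_enclosure N \<sigma> D Hd \<longleftrightarrow>
    (\<exists>Ns R \<nu>. Ns \<subseteq> basin_union N \<sigma> D \<and> uniform_equiv Ns R \<nu> \<and> \<nu> \<ge> 2
       \<and> (\<forall>(j, k)\<in>R. Hd j = Hd k)
       \<and> (\<forall>\<alpha><N. \<forall>(j, k)\<in>R. cmod (D \<alpha> j) = cmod (D \<alpha> k)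
            \<and> (\<sigma> \<alpha> j \<in> basin_union N \<sigma> D \<and> \<sigma> \<alpha> k \<in> basin_union N \<sigma> D
                 \<longrightarrow> (\<sigma> \<alpha> j, \<sigma> \<alpha> k) \<in> R))
       \<and> (\<exists>C. coh_component N \<sigma> D R C \<and> resonant N \<sigma> D R C))"
proof -
  interpret L: lsys N \<sigma> D using perm cyc by unfold_locales
  show ?thesis
  proof
    assume "has_hidden_enclosure N \<sigma> D Hd"
    then obtain P where oP: "orth_projector P"
      and rP: "mat_range P \<subseteq> mat_range (diag_proj (basin_union N \<sigma> D))"
      and cH: "mat_commute P (diag_proj (basin_union N \<sigma> D) ** diag_mat (\<lambda>j. complex_of_real (Hd j)) ** diag_proj (basin_union N \<sigma> D))"
      and cL: "\<forall>\<alpha><N. mat_commute P (diag_proj (basin_union N \<sigma> D) ** lindblad_op (\<sigma> \<alpha>) (D \<alpha>) ** diag_proj (basin_union N \<sigma> D))"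
      and nS: "\<not> (\<exists>S\<subseteq>basins N \<sigma> D. P = (\<Sum>C\<in>S. diag_proj C))"
      unfolding has_hidden_enclosure_def Let_def L.PB_eq by blast
    interpret F: fctx N \<sigma> D Hd P
      by unfold_locales (fact perm cyc oP rP cH cL nS)+
    obtain j0 k0 where jk: "j0 \<noteq> k0" "P $ j0 $ k0 \<noteq> 0" using F.offdiag by blast
    interpret G: fctx2 N \<sigma> D Hd P j0 k0
      by unfold_locales (fact perm cyc oP rP cH cL nS jk)+
    show "\<exists>Ns R \<nu>. Ns \<subseteq> basin_union N \<sigma> D \<and> uniform_equiv Ns R \<nu> \<and> \<nu> \<ge> 2
       \<and> (\<forall>(j, k)\<in>R. Hd j = Hd k)
       \<and> (\<forall>\<alpha><N. \<forall>(j, k)\<in>R. cmod (D \<alpha> j) = cmod (D \<alpha> k)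
            \<and> (\<sigma> \<alpha> j \<in> basin_union N \<sigma> D \<and> \<sigma> \<alpha> k \<in> basin_union N \<sigma> D
                 \<longrightarrow> (\<sigma> \<alpha> j, \<sigma> \<alpha> k) \<in> R))
       \<and> (\<exists>C. coh_component N \<sigma> D R C \<and> resonant N \<sigma> D R C)"
      by (rule G.fwd_main)
  next
    assume "\<exists>Ns R \<nu>. Ns \<subseteq> basin_union N \<sigma> D \<and> uniform_equiv Ns R \<nu> \<and> \<nu> \<ge> 2
       \<and> (\<forall>(j, k)\<in>R. Hd j = Hd k)
       \<and> (\<forall>\<alpha><N. \<forall>(j, k)\<in>R. cmod (D \<alpha> j) = cmod (D \<alpha> k)
            \<and> (\<sigma> \<alpha> j \<in> basin_union N \<sigma> D \<and> \<sigma> \<alpha> k \<in> basin_union N \<sigma> D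
                 \<longrightarrow> (\<sigma> \<alpha> j, \<sigma> \<alpha> k) \<in> R))
       \<and> (\<exists>C. coh_component N \<sigma> D R C \<and> resonant N \<sigma> D R C)"
    then obtain Ns R \<nu> C where h1: "Ns \<subseteq> basin_union N \<sigma> D" and h2: "uniform_equiv Ns R \<nu>"
      and h3: "\<nu> \<ge> 2" and h4: "\<forall>(j, k)\<in>R. Hd j = Hd k"
      and h5: "\<forall>\<alpha><N. \<forall>(j, k)\<in>R. cmod (D \<alpha> j) = cmod (D \<alpha> k)
            \<and> (\<sigma> \<alpha> j \<in> basin_union N \<sigma> D \<and> \<sigma> \<alpha> k \<in> basin_union N \<sigma> D
                 \<longrightarrow> (\<sigma> \<alpha> j, \<sigma> \<alpha> k) \<in> R)"
      and h6: "coh_component N \<sigma> D R C" and h7: "resonant N \<sigma> D R C"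
      by blast
    interpret Bk: bctx N \<sigma> D Hd Ns R \<nu>
      by unfold_locales (fact perm cyc h1 h2 h3 h4 h5)+
    show "has_hidden_enclosure N \<sigma> D Hd" by (rule Bk.back_main[OF h6 h7])
  qed
qed


end
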